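(* Let $n\ge 1$ and let $\tau\in S_n$ have runs (maximal increasing contiguous segments), read from left to right, of lengths $\rho_k,\dots,\rho_1,\rho_0$ (so $\rho_0$ is the length of the last run and $\tau$ has $k+1$ runs). Let $0\le l\le k$. Then $$\sum_{\substack{Pr\in \mathcal{P}ref_n\\ \operatorname{diagword}(Pr)=\tau\\ l(Pr)=l}} t^{\operatorname{area}(Pr)}q^{\operatorname{dinv}(Pr)} = t^{\operatorname{maj}(\tau)}\, q^{\rho_0+\rho_1+\dots+\rho_{l-1}}\prod_{c=1}^n [w^{(l)}(c)]_q ,$$ where $w^{(l)}(c)$ are the $l$-schedule numbers of $\tau$ defined below.
   Context: A preference function on $n$ cars is a map $f:[n]\to[n]$; $\mathcal{P}ref_n$ is the set of all $n^n$ of them. Each is drawn as a labeled lattice path in the $n\times n$ grid: for $j=1,\dots,n$ in turn, the cars $i\in f^{-1}(j)$ are written in column $j$ (the unit cells with lower-left corner $(j-1,y)$), in increasing order from bottom to top, occupying the lowest rows not yet used; each row contains exactly one car. A car whose cell has lower-left corner $(x,y)$ is said to lie in diagonal $y-x$ (the $k$-th diagonal is the line $y=x+k$). The deviation $l(Pr)$ is the maximum of $-(\text{diagonal of }c)$ over all cars $c$ (this is always $\ge 0$). $\operatorname{area}(Pr)=\sum_{\text{cars } c}(d(c)+l(Pr))$, where $d(c)$ is the diagonal of $c$. $\operatorname{dinv}(Pr)$ is the sum of: the number of primary dinvs (pairs of cars in the same diagonal such that the car further left is smaller), the number of secondary dinvs (pairs of cars $b<a$ with $a$ in diagonal $m+1$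 and $b$ in diagonal $m$ for some $m$, and $b$ in a column strictly to the right of $a$), and the tertiary dinv (the number of cars in negative diagonals). The diagonal word $\operatorname{diagword}(Pr)\in S_n$ lists the cars of each nonempty diagonal in increasing order, the diagonals taken from highest to lowest. For a permutation $\tau$, $\operatorname{maj}(\tau)$ is the sum of the positions $i$ with $\tau_i>\tau_{i+1}$; $[m]_q=1+q+\dots+q^{m-1}$. $l$-schedule numbers: let $l\ge0$ and let $\tau$ have at least $l+1$ runs. For $1\le c\le n$: if $c$ lies in one of the last $l$ runs of $\tau$, $w^{(l)}(c)$ is the number of elements smaller than $c$ in its own run plus the number of elements larger than $c$ in the previous run; if $c$ lies in the $(l+1)$-st run from the end, $w^{(l)}(c)$ is the number of elements of that run weakly to the right of $c$ (counting $c$ itself); otherwise $w^{(l)}(c)$ is the number of elements larger than $c$ in its own run plus the number of elements smaller than $c$ in the next run. (Example: for $\tau=2\,3\,1\,4\,5$, $w^{(1)}(3)=1$, $w^{(1)}(2)=2$, $w^{(1)}(1)=2$, $w^{(1)}(4)=1$, $w^{(1)}(5)=2$.) *)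

theory Defs
  imports "HOL-Library.FuncSet" "HOL-Library.Product_Lexorder"
begin

text \<open>Car i is placed in column f i (lower-left x = f i - 1);
  its row (lower-left y) is the number of cars placed before it, i.e. cars c with
  f c < f i, or f c = f i and c < i.\<close>

definition pref_fns :: "nat \<Rightarrow> (nat \<Rightarrow> nat) set" where
  "pref_fns n = {1..n} \<rightarrow>\<^sub>E {1..n}"

definition car_row :: "nat \<Rightarrow> (nat \<Rightarrow> nat) \<Rightarrow> nat \<Rightarrow> nat" where
  "car_row n f i = card {c \<in> {1..n}. f c < f i \<or> (f c = f i \<and> c < i)}"

definition car_diag :: "nat \<Rightarrow> (nat \<Rightarrow> nat) \<Rightarrow> nat \<Rightarrow> int" where
  "car_diag n f i = int (car_row n f i) - (int (f i) - 1)"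

definition deviation :: "nat \<Rightarrow> (nat \<Rightarrow> nat) \<Rightarrow> int" where
  "deviation n f = Max ((\<lambda>c. - car_diag n f c) ` {1..n})"

definition area :: "nat \<Rightarrow> (nat \<Rightarrow> nat) \<Rightarrow> int" where
  "area n f = (\<Sum>c\<in>{1..n}. car_diag n f c + deviation n f)"

definition primary_dinv :: "nat \<Rightarrow> (nat \<Rightarrow> nat) \<Rightarrow> nat" where
  "primary_dinv n f = card {(a, b). a \<in> {1..n} \<and> b \<in> {1..n} \<and>
      car_diag n f a = car_diag n f b \<and> f a < f b \<and> a < b}"

definition secondary_dinv :: "nat \<Rightarrow> (nat \<Rightarrow> nat) \<Rightarrow> nat" where
  "secondary_dinv n f = card {(a, b). a \<in> {1..n} \<and> b \<in> {1..n} \<and> b < a \<and>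
      car_diag n f a = car_diag n f b + 1 \<and> f a < f b}"

definition tertiary_dinv :: "nat \<Rightarrow> (nat \<Rightarrow> nat) \<Rightarrow> nat" where
  "tertiary_dinv n f = card {c \<in> {1..n}. car_diag n f c < 0}"

definition dinv :: "nat \<Rightarrow> (nat \<Rightarrow> nat) \<Rightarrow> nat" where
  "dinv n f = primary_dinv n f + secondary_dinv n f + tertiary_dinv n f"

definition diagword :: "nat \<Rightarrow> (nat \<Rightarrow> nat) \<Rightarrow> nat list" where
  "diagword n f = sort_key (\<lambda>c. (- car_diag n f c, c)) [1..<n+1]"

definition is_perm_word :: "nat \<Rightarrow> nat list \<Rightarrow> bool" where
  "is_perm_word n \<tau> \<longleftrightarrow> distinct \<tau> \<and> set \<tau> = {1..n}"

definition maj :: "nat list \<Rightarrow> nat" where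
  "maj \<tau> = (\<Sum>i\<in>{1..<length \<tau>}. if \<tau> ! (i - 1) > \<tau> ! i then i else 0)"

fun runs :: "nat list \<Rightarrow> nat list list" where
  "runs [] = []"
| "runs (x # xs) = (case runs xs of
       [] \<Rightarrow> [[x]]
     | r # rs \<Rightarrow> (if x < hd r then (x # r) # rs else [x] # r # rs))"

definition rho :: "nat list \<Rightarrow> nat \<Rightarrow> nat" where
  "rho \<tau> i = length (runs \<tau> ! (length (runs \<tau>) - 1 - i))"

definition run_idx :: "nat list \<Rightarrow> nat \<Rightarrow> nat" where
  "run_idx \<tau> c = (LEAST j. j < length (runs \<tau>) \<and> c \<in> set (runs \<tau> ! j))"

definition sched :: "nat \<Rightarrow> nat list \<Rightarrow> nat \<Rightarrow> nat" where
  "sched l \<tau> c = (let R = runs \<tau>; m = length R; j = run_idx \<tau> c in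
     if m - l \<le> j then
       length (filter (\<lambda>x. x < c) (R ! j)) + length (filter (\<lambda>x. c < x) (R ! (j - 1)))
     else if j = m - l - 1 then
       length (dropWhile (\<lambda>x. x \<noteq> c) (R ! j))
     else
       length (filter (\<lambda>x. c < x) (R ! j)) + length (filter (\<lambda>x. x < c) (R ! (j + 1))))"

definition qint :: "nat \<Rightarrow> 'a::comm_semiring_1 \<Rightarrow> 'a" where
  "qint m q = (\<Sum>i<m. q ^ i)"

lemma sched_example:
  "sched 1 [2,3,1,4,5] 3 = 1 \<and> sched 1 [2,3,1,4,5] 2 = 2 \<and> sched 1 [2,3,1,4,5] 1 = 2
  \<and> sched 1 [2,3,1,4,5] 4 = 1 \<and> sched 1 [2,3,1,4,5] 5 = 2"
proof -
  have r: "runs [2,3,1,4,5] = [[2,3],[1,4,5]]" by simp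
  have a: "run_idx [2,3,1,4,5] 2 = 0" "run_idx [2,3,1,4,5] 3 = 0"
    unfolding run_idx_def r by (rule Least_equality; simp)+
  have b: "run_idx [2,3,1,4,5] c = 1" if "c \<in> {1,4,5}" for c
    unfolding run_idx_def r using that
    by (intro Least_equality) (auto simp: less_Suc_eq)
  show ?thesis using a b[of 1] b[of 4] b[of 5] by (simp add: sched_def Let_def r)
qed

end

theory Submission
  imports Defs "HOL-Library.Multiset"
begin


definition goodstep :: "(nat \<Rightarrow> int) \<Rightarrow> nat \<Rightarrow> nat \<Rightarrow> bool" where
  "goodstep d x y \<longleftrightarrow> d y \<le> d x + 1 \<and> (d y = d x + 1 \<longrightarrow> x < y)"

definition valid :: "(nat \<Rightarrow> int) \<Rightarrow> nat list \<Rightarrow> bool" where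
  "valid d w \<longleftrightarrow> successively (goodstep d) w \<and> (w \<noteq> [] \<longrightarrow> d (hd w) \<le> 0 \<and> 0 \<le> d (last w))"

definition VS :: "(nat \<Rightarrow> int) \<Rightarrow> nat set \<Rightarrow> nat list set" where
  "VS d A = {w. distinct w \<and> set w = A \<and> valid d w}"

definition dp :: "(nat \<Rightarrow> int) \<Rightarrow> nat \<Rightarrow> nat \<Rightarrow> bool" where
  "dp d x y \<longleftrightarrow> (d x = d y \<and> x < y) \<or> (d x = d y + 1 \<and> y < x)"

fun wdinv :: "(nat \<Rightarrow> int) \<Rightarrow> nat list \<Rightarrow> nat" where
  "wdinv d [] = 0"
| "wdinv d (x # xs) = length (filter (dp d x) xs) + wdinv d xs"

definition GF :: "(nat \<Rightarrow> int) \<Rightarrow> nat set \<Rightarrow> 'a::comm_ring_1 \<Rightarrow> 'a" where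
  "GF d A q = (\<Sum>w\<in>VS d A. q ^ wdinv d w)"

lemma finite_VS: "finite A \<Longrightarrow> finite (VS d A)"
proof -
  assume "finite A"
  have "VS d A \<subseteq> {w. set w \<subseteq> A \<and> length w \<le> card A}"
    unfolding VS_def using distinct_card by fastforce
  moreover have "finite {w. set w \<subseteq> A \<and> length w \<le> card A}"
    using finite_lists_length_le[OF \<open>finite A\<close>] by simp
  ultimately show ?thesis by (rule finite_subset)
qed

lemma wdinv_ins:
  "wdinv d (u @ c # v) = wdinv d (u @ v) + length (filter (dp d c) v) + length (filter (\<lambda>x. dp d x c) u)"
  by (induction u) auto

lemma qint_Suc: "qint (Suc m) q = qint m q + q ^ m"
  by (simp add: qint_def)

lemma qint_0[simp]: "qint 0 q = 0" by (simp add: qint_def)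

lemma count_after:
  "(\<Sum>i<length xs. if xs ! i \<in> S then q ^ length (filter (\<lambda>x. x \<in> S) (drop (Suc i) xs)) else 0)
   = qint (length (filter (\<lambda>x. x \<in> S) xs)) (q::'a::comm_ring_1)"
proof (induction xs)
  case Nil then show ?case by simp
next
  case (Cons z ys)
  let ?g = "\<lambda>i. if (z#ys) ! i \<in> S then q ^ length (filter (\<lambda>x. x \<in> S) (drop (Suc i) (z#ys))) else 0"
  have "(\<Sum>i<length (z#ys). ?g i) = ?g 0 + (\<Sum>i<length ys. ?g (Suc i))"
    by (simp only: length_Cons sum.lessThan_Suc_shift)
  also have "\<dots> = qint (length (filter (\<lambda>x. x \<in> S) (z#ys))) q"
    using Cons.IH by (simp add: qint_Suc algebra_simps cong: if_cong)
  finally show ?case .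
qed

lemma count_before:
  "(\<Sum>i<length xs. if xs ! i \<in> S then q ^ length (filter (\<lambda>x. x \<in> S) (take i xs)) else 0)
   = qint (length (filter (\<lambda>x. x \<in> S) xs)) (q::'a::comm_ring_1)"
proof (induction xs rule: rev_induct)
  case Nil then show ?case by simp
next
  case (snoc z ys)
  have "(\<Sum>i<length ys. if (ys @ [z]) ! i \<in> S then q ^ length (filter (\<lambda>x. x \<in> S) (take i (ys @ [z]))) else 0)
     = (\<Sum>i<length ys. if ys ! i \<in> S then q ^ length (filter (\<lambda>x. x \<in> S) (take i ys)) else 0)"
    by (intro sum.cong) (auto simp: nth_append)
  then show ?case
    by (simp add: snoc qint_Suc algebra_simps)
qed

lemma valid_split:
  "valid d (u @ c # v) \<longleftrightarrow>
     successively (goodstep d) u \<and> successively (goodstep d) v \<and>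
     (u \<noteq> [] \<longrightarrow> goodstep d (last u) c) \<and> (v \<noteq> [] \<longrightarrow> goodstep d c (hd v)) \<and>
     d (hd (u @ [c])) \<le> 0 \<and> 0 \<le> d (last (c # v))"
  unfolding valid_def
  by (cases u; cases v) (auto simp: successively_append_iff successively_Cons)

lemma valid_join:
  "valid d (u @ v) \<longleftrightarrow>
     successively (goodstep d) u \<and> successively (goodstep d) v \<and>
     (u \<noteq> [] \<longrightarrow> v \<noteq> [] \<longrightarrow> goodstep d (last u) (hd v)) \<and>
     (u @ v \<noteq> [] \<longrightarrow> d (hd (u @ v)) \<le> 0 \<and> 0 \<le> d (last (u @ v)))"
  unfolding valid_def
  by (auto simp: successively_append_iff)

lemma bij_ins:
  assumes "\<And>w' p. w' \<in> VS d (A - {c}) \<Longrightarrow> p \<in> P w' \<Longrightarrow> p \<le> length w' \<and> valid d (take p w' @ c # drop p w')"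
    and "\<And>u v. valid d (u @ c # v) \<Longrightarrow> distinct (u @ c # v) \<Longrightarrow> set (u @ c # v) = A \<Longrightarrow>
             valid d (u @ v) \<and> length u \<in> P (u @ v)"
    and "c \<in> A"
  shows "bij_betw (\<lambda>(w', p). take p w' @ c # drop p w') (SIGMA w':VS d (A - {c}). P w') (VS d A)"
  unfolding bij_betw_def
proof (intro conjI)
  show "inj_on (\<lambda>(w', p). take p w' @ c # drop p w') (SIGMA w':VS d (A - {c}). P w')"
  proof (rule inj_onI, clarsimp)
    fix w1 p1 w2 p2
    assume h: "w1 \<in> VS d (A - {c})" "p1 \<in> P w1" "w2 \<in> VS d (A - {c})" "p2 \<in> P w2"
      and e: "take p1 w1 @ c # drop p1 w1 = take p2 w2 @ c # drop p2 w2"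
    have c1: "c \<notin> set w1" "c \<notin> set w2" using h unfolding VS_def by auto
    then have "c \<notin> set (take p1 w1)" "c \<notin> set (drop p1 w1)"
      using in_set_takeD in_set_dropD by fastforce+
    from append_Cons_eq_iff[OF this] e
    have t: "take p1 w1 = take p2 w2" "drop p1 w1 = drop p2 w2" by auto
    then have "w1 = w2" by (metis append_take_drop_id)
    moreover have "p1 = p2"
      using t(1) assms(1)[OF h(1,2)] assms(1)[OF h(3,4)] \<open>w1 = w2\<close>
      by (metis length_take min.absorb2)
    ultimately show "w1 = w2 \<and> p1 = p2" by simp
  qed
next
  show "(\<lambda>(w', p). take p w' @ c # drop p w') ` (SIGMA w':VS d (A - {c}). P w') = VS d A"
  proof (intro equalityI subsetI)
    fix w assume "w \<in> (\<lambda>(w', p). take p w' @ c # drop p w') ` (SIGMA w':VS d (A - {c}). P w')"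
    then obtain w' p where h: "w' \<in> VS d (A - {c})" "p \<in> P w'" and w: "w = take p w' @ c # drop p w'"
      by auto
    have w': "distinct w'" "set w' = A - {c}" using h(1) unfolding VS_def by auto
    have e: "take p w' @ c # drop p w' = (take p w' @ [c]) @ drop p w'" by simp
    have "distinct (take p w' @ drop p w')" using w' by simp
    then have "distinct w" using w' unfolding w distinct_append
      by (auto dest: in_set_takeD in_set_dropD)
    moreover have "set w = insert c (set (take p w') \<union> set (drop p w'))" unfolding w by auto
    then have "set w = insert c (set w')" by (metis append_take_drop_id set_append)
    then have "set w = A" using w' assms(3) by auto
    ultimately have "distinct w" "set w = A" by auto
    then show "w \<in> VS d A" using assms(1)[OF h] w unfolding VS_def by simp
  next
    fix w assume "w \<in> VS d A"
    then have w: "distinct w" "set w = A" "valid d w" unfolding VS_def by auto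
    then have "c \<in> set w" using assms(3) by simp
    then obtain u v where uv: "w = u @ c # v" by (meson split_list)
    have r: "valid d (u @ v) \<and> length u \<in> P (u @ v)" using assms(2) w uv by simp
    have "u @ v \<in> VS d (A - {c})" using w r unfolding VS_def uv by auto
    moreover have "w = (\<lambda>(w', p). take p w' @ c # drop p w') (u @ v, length u)" using uv by simp
    ultimately show "w \<in> (\<lambda>(w', p). take p w' @ c # drop p w') ` (SIGMA w':VS d (A - {c}). P w')"
      using r by blast
  qed
qed

lemma GF_split:
  fixes q :: "'a::comm_ring_1"
  assumes fin: "finite A"
    and bij: "bij_betw (\<lambda>(w', p). take p w' @ c # drop p w') (SIGMA w':VS d (A - {c}). P w') (VS d A)"
    and finP: "\<And>w'. w' \<in> VS d (A - {c}) \<Longrightarrow> finite (P w')"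
    and inc: "\<And>w'. w' \<in> VS d (A - {c}) \<Longrightarrow> (\<Sum>p\<in>P w'. q ^ wdinv d (take p w' @ c # drop p w')) = q ^ wdinv d w' * Q"
  shows "GF d A q = Q * GF d (A - {c}) q"
proof -
  have "GF d A q = (\<Sum>x\<in>(SIGMA w':VS d (A - {c}). P w'). q ^ wdinv d ((\<lambda>(w', p). take p w' @ c # drop p w') x))"
    unfolding GF_def by (rule sum.reindex_bij_betw[OF bij, symmetric])
  also have "\<dots> = (\<Sum>w'\<in>VS d (A - {c}). \<Sum>p\<in>P w'. q ^ wdinv d (take p w' @ c # drop p w'))"
    by (subst sum.Sigma) (use fin finP finite_VS in \<open>auto simp: split_beta\<close>)
  also have "\<dots> = (\<Sum>w'\<in>VS d (A - {c}). q ^ wdinv d w' * Q)"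
    by (rule sum.cong) (auto simp: inc)
  also have "\<dots> = Q * GF d (A - {c}) q" unfolding GF_def sum_distrib_left by (simp add: mult.commute)
  finally show ?thesis .
qed

lemma GF_H:
  fixes q :: "'a::comm_ring_1"
  assumes fin: "finite A" and cA: "c \<in> A"
    and M: "\<forall>x\<in>A. d x \<le> d c" and nn: "\<forall>x\<in>A. 0 \<le> d x"
    and cmin: "\<forall>x\<in>A. d x = d c \<longrightarrow> c \<le> x"
  shows "GF d A q = qint (card {x\<in>A. (d x = d c \<and> x \<noteq> c) \<or> (d x = d c - 1 \<and> x < c)}
                          + (if d c = 0 then 1 else 0)) q * GF d (A - {c}) q"
proof -
  define S where "S = {x\<in>A. (d x = d c \<and> x \<noteq> c) \<or> (d x = d c - 1 \<and> x < c)}"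
  define P where "P w' = {p. p \<le> length w' \<and> ((p = 0 \<and> d c = 0) \<or> (0 < p \<and> w' ! (p - 1) \<in> S))}" for w' :: "nat list"
  have bij: "bij_betw (\<lambda>(w', p). take p w' @ c # drop p w') (SIGMA w':VS d (A - {c}). P w') (VS d A)"
  proof (rule bij_ins[OF _ _ cA])
    fix w' p assume h: "w' \<in> VS d (A - {c})" "p \<in> P w'"
    then have w': "distinct w'" "set w' = A - {c}" "valid d w'" unfolding VS_def by auto
    have pl: "p \<le> length w'" using h(2) unfolding P_def by auto
    define u where "u = take p w'"
    define v where "v = drop p w'"
    have uv: "w' = u @ v" unfolding u_def v_def by simp
    have vu: "valid d (u @ v)" using w' uv by simp
    have sA: "set u \<subseteq> A" "set v \<subseteq> A" using w'(2) uv by auto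
    have "valid d (u @ c # v)"
      unfolding valid_split
    proof (intro conjI impI)
      show "successively (goodstep d) u" "successively (goodstep d) v" using vu by (auto simp: valid_join)
      show "goodstep d (last u) c" if "u \<noteq> []"
      proof -
        have "last u = w' ! (p - 1)" using that pl unfolding u_def by (simp add: last_conv_nth)
        moreover have "p \<noteq> 0" using that u_def by auto
        ultimately have "last u \<in> S" using h(2) unfolding P_def by auto
        then show ?thesis unfolding S_def goodstep_def by auto
      qed
      show "goodstep d c (hd v)" if "v \<noteq> []"
      proof -
        have "hd v \<in> A" using that sA by auto
        then have "d (hd v) \<le> d c" using M by auto
        then show ?thesis unfolding goodstep_def by auto
      qed
      show "d (hd (u @ [c])) \<le> 0"
      proof (cases "u = []")
        case True
        then have "p = 0" using pl True unfolding u_def by (cases w') auto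
        then show ?thesis using h(2) True unfolding P_def by auto
      next
        case False then show ?thesis using vu unfolding valid_join by auto
      qed
      show "0 \<le> d (last (c # v))"
        using vu nn cA unfolding valid_join by auto
    qed
    then show "p \<le> length w' \<and> valid d (take p w' @ c # drop p w')" using pl u_def v_def by simp
  next
    fix u v assume h: "valid d (u @ c # v)" "distinct (u @ c # v)" "set (u @ c # v) = A"
    have g: "successively (goodstep d) u" "successively (goodstep d) v"
      "u \<noteq> [] \<Longrightarrow> goodstep d (last u) c" "v \<noteq> [] \<Longrightarrow> goodstep d c (hd v)"
      "d (hd (u @ [c])) \<le> 0" "0 \<le> d (last (c # v))"
      using h(1) unfolding valid_split by auto
    have sA: "set u \<subseteq> A" "set v \<subseteq> A" using h(3) by auto
    have ne: "last u \<noteq> c" if "u \<noteq> []" using h(2) that by auto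
    have "valid d (u @ v)"
      unfolding valid_join
    proof (intro conjI impI)
      show "successively (goodstep d) u" "successively (goodstep d) v" using g by auto
      show "goodstep d (last u) (hd v)" if "u \<noteq> []" "v \<noteq> []"
      proof -
        have "last u \<in> A" "hd v \<in> A" using sA that by auto
        then show ?thesis using g(3)[OF that(1)] g(4)[OF that(2)] M cmin unfolding goodstep_def by force
      qed
      show "d (hd (u @ v)) \<le> 0" if "u @ v \<noteq> []"
      proof (cases "u = []")
        case True
        then have "v \<noteq> []" "d c \<le> 0" using that g(5) by auto
        then have "hd v \<in> A" using sA by auto
        then show ?thesis using True M \<open>d c \<le> 0\<close> by force
      next
        case False then show ?thesis using g(5) by simp
      qed
      show "0 \<le> d (last (u @ v))" if "u @ v \<noteq> []"
      proof (cases "v = []")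
        case True
        then have "u \<noteq> []" using that by auto
        then have "last u \<in> A" using sA by auto
        then show ?thesis using True nn by auto
      next
        case False then show ?thesis using g(6) by simp
      qed
    qed
    moreover have "length u \<in> P (u @ v)"
    proof (cases "u = []")
      case True
      then have "d c = 0" using g(5) nn cA by force
      then show ?thesis using True unfolding P_def by auto
    next
      case False
      have "(u @ v) ! (length u - 1) = last u" using False by (simp add: nth_append last_conv_nth)
      moreover have "last u \<in> S"
      proof -
        have luA: "last u \<in> A" using sA False by auto
        then have "d (last u) \<le> d c" using M by auto
        moreover have "d c \<le> d (last u) + 1" "d c = d (last u) + 1 \<longrightarrow> last u < c"
          using g(3)[OF False] unfolding goodstep_def by auto
        ultimately show ?thesis using luA ne[OF False] unfolding S_def by auto
      qed
      ultimately show ?thesis using False unfolding P_def by auto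
    qed
    ultimately show "valid d (u @ v) \<and> length u \<in> P (u @ v)" by simp
  qed
  have "GF d A q = qint (card S + (if d c = 0 then 1 else 0)) q * GF d (A - {c}) q"
  proof (rule GF_split[OF fin bij])
    fix w' assume "w' \<in> VS d (A - {c})"
    show "finite (P w')" unfolding P_def by auto
  next
    fix w' assume hw: "w' \<in> VS d (A - {c})"
    then have w': "distinct w'" "set w' = A - {c}" unfolding VS_def by auto
    have cntS: "length (filter (\<lambda>x. x \<in> S) w') = card S"
      using w' by (subst distinct_length_filter) (auto simp: S_def intro!: arg_cong[where f=card])
    have incr: "wdinv d (take p w' @ c # drop p w') = wdinv d w' + length (filter (\<lambda>x. x \<in> S) (drop p w'))" for p
    proof -
      have "filter (dp d c) (drop p w') = filter (\<lambda>x. x \<in> S) (drop p w')"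
        using w' cmin M by (intro filter_cong) (auto simp: dp_def S_def dest!: in_set_dropD)
      moreover have "filter (\<lambda>x. dp d x c) (take p w') = []"
        using w' cmin M by (force simp: dp_def filter_empty_conv dest!: in_set_takeD)
      ultimately show ?thesis by (simp add: wdinv_ins)
    qed
    have Pe: "P w' = (if d c = 0 then {0} else {}) \<union> Suc ` {i \<in> {..<length w'}. w' ! i \<in> S}"
      unfolding P_def by (auto simp: image_iff gr0_conv_Suc)
    have "(\<Sum>p\<in>P w'. q ^ length (filter (\<lambda>x. x \<in> S) (drop p w')))
        = (if d c = 0 then q ^ card S else 0) + (\<Sum>i\<in>{i \<in> {..<length w'}. w' ! i \<in> S}. q ^ length (filter (\<lambda>x. x \<in> S) (drop (Suc i) w')))"
      unfolding Pe by (subst sum.union_disjoint) (auto simp: sum.reindex cntS)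
    also have "\<dots> = qint (card S + (if d c = 0 then 1 else 0)) q"
      by (subst sum.inter_filter) (auto simp: count_after cntS qint_Suc)
    finally have F: "(\<Sum>p\<in>P w'. q ^ length (filter (\<lambda>x. x \<in> S) (drop p w'))) = qint (card S + (if d c = 0 then 1 else 0)) q" .
    have "(\<Sum>p\<in>P w'. q ^ wdinv d (take p w' @ c # drop p w')) = (\<Sum>p\<in>P w'. q ^ wdinv d w' * q ^ length (filter (\<lambda>x. x \<in> S) (drop p w')))"
      by (simp only: incr power_add)
    also have "\<dots> = q ^ wdinv d w' * (\<Sum>p\<in>P w'. q ^ length (filter (\<lambda>x. x \<in> S) (drop p w')))"
      by (rule sum_distrib_left[symmetric])
    finally show "(\<Sum>p\<in>P w'. q ^ wdinv d (take p w' @ c # drop p w')) =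
          q ^ wdinv d w' * qint (card S + (if d c = 0 then 1 else 0)) q" by (simp only: F)
  qed
  then show ?thesis unfolding S_def .
qed

lemma GF_L:
  fixes q :: "'a::comm_ring_1"
  assumes fin: "finite A" and cA: "c \<in> A"
    and mn: "\<forall>x\<in>A. d c \<le> d x" and neg: "d c < 0"
    and cmax: "\<forall>x\<in>A. d x = d c \<longrightarrow> x \<le> c"
  shows "GF d A q = qint (card {x\<in>A. (d x = d c \<and> x \<noteq> c) \<or> (d x = d c + 1 \<and> c < x)}) q * GF d (A - {c}) q"
proof -
  define S where "S = {x\<in>A. (d x = d c \<and> x \<noteq> c) \<or> (d x = d c + 1 \<and> c < x)}"
  define P where "P w' = {p. p < length w' \<and> w' ! p \<in> S}" for w' :: "nat list"
  have bij: "bij_betw (\<lambda>(w', p). take p w' @ c # drop p w') (SIGMA w':VS d (A - {c}). P w') (VS d A)"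
  proof (rule bij_ins[OF _ _ cA])
    fix w' p assume h: "w' \<in> VS d (A - {c})" "p \<in> P w'"
    then have w': "distinct w'" "set w' = A - {c}" "valid d w'" unfolding VS_def by auto
    have pl: "p < length w'" "w' ! p \<in> S" using h(2) unfolding P_def by auto
    define u where "u = take p w'"
    define v where "v = drop p w'"
    have uv: "w' = u @ v" unfolding u_def v_def by simp
    have vu: "valid d (u @ v)" using w' uv by simp
    have sA: "set u \<subseteq> A" "set v \<subseteq> A" using w'(2) uv by auto
    have vne: "v \<noteq> []" and hdv: "hd v = w' ! p" using pl unfolding v_def by (auto simp: hd_drop_conv_nth)
    have "valid d (u @ c # v)"
      unfolding valid_split
    proof (intro conjI impI)
      show "successively (goodstep d) u" "successively (goodstep d) v" using vu by (auto simp: valid_join)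
      show "goodstep d (last u) c" if "u \<noteq> []"
      proof -
        have "last u \<in> A" using sA that by auto
        then show ?thesis using mn unfolding goodstep_def by force
      qed
      show "goodstep d c (hd v)" if "v \<noteq> []"
        using pl(2) hdv unfolding S_def goodstep_def by auto
      show "d (hd (u @ [c])) \<le> 0"
      proof (cases "u = []")
        case True then show ?thesis using neg by simp
      next
        case False then show ?thesis using vu unfolding valid_join by auto
      qed
      show "0 \<le> d (last (c # v))"
        using vu vne unfolding valid_join by auto
    qed
    then show "p \<le> length w' \<and> valid d (take p w' @ c # drop p w')" using pl u_def v_def by simp
  next
    fix u v assume h: "valid d (u @ c # v)" "distinct (u @ c # v)" "set (u @ c # v) = A"
    have g: "successively (goodstep d) u" "successively (goodstep d) v"
      "u \<noteq> [] \<Longrightarrow> goodstep d (last u) c" "v \<noteq> [] \<Longrightarrow> goodstep d c (hd v)"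
      "d (hd (u @ [c])) \<le> 0" "0 \<le> d (last (c # v))"
      using h(1) unfolding valid_split by auto
    have sA: "set u \<subseteq> A" "set v \<subseteq> A" using h(3) by auto
    have ne: "last u \<noteq> c" if "u \<noteq> []" using h(2) that by auto
    have ne2: "hd v \<noteq> c" if "v \<noteq> []" using h(2) that by auto
    have vne: "v \<noteq> []" using g(6) neg by (cases v) auto
    have hvA: "hd v \<in> A" using vne sA by auto
    have "valid d (u @ v)"
      unfolding valid_join
    proof (intro conjI impI)
      show "successively (goodstep d) u" "successively (goodstep d) v" using g by auto
      show "goodstep d (last u) (hd v)" if "u \<noteq> []" "v \<noteq> []"
      proof -
        have "last u \<in> A" using sA that by auto
        then show ?thesis using g(3)[OF that(1)] g(4)[OF that(2)] mn cmax hvA ne[OF that(1)]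
          unfolding goodstep_def by force
      qed
      show "d (hd (u @ v)) \<le> 0" if "u @ v \<noteq> []"
      proof (cases "u = []")
        case True
        then show ?thesis using g(4)[OF vne] neg unfolding goodstep_def by auto
      next
        case False then show ?thesis using g(5) by simp
      qed
      show "0 \<le> d (last (u @ v))" if "u @ v \<noteq> []"
        using g(6) vne by simp
    qed
    moreover have "length u \<in> P (u @ v)"
    proof -
      have "(u @ v) ! length u = hd v" using vne by (simp add: nth_append hd_conv_nth)
      moreover have "hd v \<in> S" using g(4)[OF vne] ne2[OF vne] hvA mn
        unfolding S_def goodstep_def by force
      ultimately show ?thesis using vne unfolding P_def by auto
    qed
    ultimately show "valid d (u @ v) \<and> length u \<in> P (u @ v)" by simp
  qed
  have "GF d A q = qint (card S) q * GF d (A - {c}) q"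
  proof (rule GF_split[OF fin bij])
    fix w' assume "w' \<in> VS d (A - {c})"
    show "finite (P w')" unfolding P_def by auto
  next
    fix w' assume hw: "w' \<in> VS d (A - {c})"
    then have w': "distinct w'" "set w' = A - {c}" unfolding VS_def by auto
    have cntS: "length (filter (\<lambda>x. x \<in> S) w') = card S"
      using w' by (subst distinct_length_filter) (auto simp: S_def intro!: arg_cong[where f=card])
    have incr: "wdinv d (take p w' @ c # drop p w') = wdinv d w' + length (filter (\<lambda>x. x \<in> S) (take p w'))" for p
    proof -
      have "filter (\<lambda>x. dp d x c) (take p w') = filter (\<lambda>x. x \<in> S) (take p w')"
        using w' cmax mn by (intro filter_cong) (auto simp: dp_def S_def dest!: in_set_takeD)
      moreover have "filter (dp d c) (drop p w') = []"
        using w' cmax mn by (force simp: dp_def filter_empty_conv dest!: in_set_dropD)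
      ultimately show ?thesis by (simp add: wdinv_ins)
    qed
    have Pe: "P w' = {i \<in> {..<length w'}. w' ! i \<in> S}" unfolding P_def by auto
    have F: "(\<Sum>p\<in>P w'. q ^ length (filter (\<lambda>x. x \<in> S) (take p w'))) = qint (card S) q"
      unfolding Pe by (subst sum.inter_filter) (auto simp: count_before cntS)
    have "(\<Sum>p\<in>P w'. q ^ wdinv d (take p w' @ c # drop p w')) = (\<Sum>p\<in>P w'. q ^ wdinv d w' * q ^ length (filter (\<lambda>x. x \<in> S) (take p w')))"
      by (simp only: incr power_add)
    also have "\<dots> = q ^ wdinv d w' * (\<Sum>p\<in>P w'. q ^ length (filter (\<lambda>x. x \<in> S) (take p w')))"
      by (rule sum_distrib_left[symmetric])
    finally show "(\<Sum>p\<in>P w'. q ^ wdinv d (take p w' @ c # drop p w')) = q ^ wdinv d w' * qint (card S) q"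
      by (simp only: F)
  qed
  then show ?thesis unfolding S_def .
qed

lemma GF_empty: "GF d {} q = 1"
proof -
  have "VS d {} = {[]}" unfolding VS_def valid_def by auto
  then show ?thesis unfolding GF_def by simp
qed



lemma sorted_lt_Cons: "sorted_wrt (<) r \<Longrightarrow> r \<noteq> [] \<Longrightarrow> (x::nat) < hd r \<Longrightarrow> sorted_wrt (<) (x # r)"
  by (cases r) auto

lemma runs_props:
  "concat (runs xs) = xs \<and> (\<forall>r\<in>set (runs xs). r \<noteq> [] \<and> sorted_wrt (<) r)
   \<and> successively (\<lambda>a b. \<not> last a < hd b) (runs xs)"
proof (induction xs)
  case Nil then show ?case by simp
next
  case (Cons x xs)
  show ?case
  proof (cases "runs xs")
    case Nil
    then show ?thesis using Cons by simp
  next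
    case (Cons r rs)
    have r: "r \<noteq> []" "sorted_wrt (<) r" "hd r = hd xs" "concat (r # rs) = xs"
      using Cons.IH Cons by auto
    show ?thesis
    proof (cases "x < hd r")
      case True
      then show ?thesis using Cons.IH Cons r sorted_lt_Cons[OF r(2) r(1) True]
        by (auto simp: successively_Cons)
    next
      case False
      then show ?thesis using Cons.IH Cons r by (auto simp: successively_Cons)
    qed
  qed
qed

lemma runs_concat_eq: "concat (runs xs) = xs" using runs_props by blast
lemma runs_nonempty: "r \<in> set (runs xs) \<Longrightarrow> r \<noteq> []" using runs_props by blast
lemma runs_sorted: "r \<in> set (runs xs) \<Longrightarrow> sorted_wrt (<) r" using runs_props by blast
lemma runs_desc: "successively (\<lambda>a b. \<not> last a < hd b) (runs xs)" using runs_props by blast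

lemma runs_app:
  assumes "r \<noteq> []" "sorted_wrt (<) r" "ys = [] \<or> \<not> last r < hd ys"
  shows "runs (r @ ys) = r # runs ys"
  using assms
proof (induction r)
  case Nil then show ?case by simp
next
  case (Cons x r)
  show ?case
  proof (cases "r = []")
    case True
    show ?thesis
    proof (cases "runs ys")
      case Nil
      then have "ys = []" using runs_concat_eq[of ys] by simp
      then show ?thesis using True Nil by simp
    next
      case (Cons r' rs')
      have "r' \<noteq> []" using runs_nonempty[of r' ys] Cons by simp
      then have "hd r' = hd ys" using runs_concat_eq[of ys] Cons by (cases r') auto
      moreover have "ys \<noteq> []" using runs_concat_eq[of ys] Cons \<open>r' \<noteq> []\<close> by auto
      ultimately show ?thesis using True Cons Cons.prems by auto
    qed
  next
    case False
    have IH: "runs (r @ ys) = r # runs ys" using Cons False by auto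
    have "x < hd r" using Cons.prems False by (cases r) auto
    then show ?thesis using IH False by (simp add: hd_append)
  qed
qed

lemma sorted_lt_last: "sorted_wrt (<) b \<Longrightarrow> x \<in> set b \<Longrightarrow> (x::nat) \<le> last b"
  by (induction b) (auto, metis last_in_set less_imp_le empty_iff list.set(1))

lemma sorted_lt_hd: "sorted_wrt (<) b \<Longrightarrow> x \<in> set b \<Longrightarrow> hd b \<le> (x::nat)"
  by (cases b) auto

lemma runs_concat:
  assumes "\<forall>b\<in>set Bs. b \<noteq> [] \<and> sorted_wrt (<) b"
    and "successively (\<lambda>a b. \<exists>x\<in>set a. \<exists>y\<in>set b. y < (x::nat)) Bs"
  shows "runs (concat Bs) = Bs"
  using assms
proof (induction Bs)
  case Nil then show ?case by simp
next
  case (Cons b Bs)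
  have IH: "runs (concat Bs) = Bs" using Cons by (auto simp: successively_Cons)
  have "concat Bs = [] \<or> \<not> last b < hd (concat Bs)"
  proof (cases Bs)
    case Nil then show ?thesis by simp
  next
    case (Cons b' Bs')
    then obtain x y where xy: "x \<in> set b" "y \<in> set b'" "y < x" using Cons.prems by (auto simp: successively_Cons)
    have "b' \<noteq> []" "sorted_wrt (<) b'" "sorted_wrt (<) b" using Cons.prems Cons by auto
    then have "hd (concat Bs) = hd b'" using Cons by (cases b') auto
    moreover have "hd b' \<le> y" using sorted_lt_hd \<open>sorted_wrt (<) b'\<close> xy by blast
    moreover have "x \<le> last b" using sorted_lt_last \<open>sorted_wrt (<) b\<close> xy by blast
    ultimately show ?thesis using xy by auto
  qed
  then show ?case using runs_app[of b "concat Bs"] Cons.prems IH by auto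
qed



fun Phi :: "nat list list \<Rightarrow> nat" where
  "Phi [] = 0"
| "Phi (b # R) = length b * length R + Phi R"

definition desc :: "nat list \<Rightarrow> nat" where
  "desc xs = (\<Sum>i\<in>{1..<length xs}. if xs ! (i - 1) > xs ! i then 1 else 0)"

lemma shift_sum:
  assumes "xs \<noteq> []"
  shows "(\<Sum>i\<in>{1..<length (x # xs)}. f ((x#xs) ! (i - 1)) ((x#xs) ! i) i)
       = f x (hd xs) 1 + (\<Sum>i\<in>{1..<length xs}. f (xs ! (i - 1)) (xs ! i) (Suc i))"
proof -
  have "{1..<length (x # xs)} = insert 1 {Suc 1..<Suc (length xs)}" using assms by (cases xs) auto
  then have "(\<Sum>i\<in>{1..<length (x # xs)}. f ((x#xs) ! (i - 1)) ((x#xs) ! i) i)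
     = f x (xs ! 0) 1 + (\<Sum>i\<in>{Suc 1..<Suc (length xs)}. f ((x#xs) ! (i - 1)) ((x#xs) ! i) i)"
    by simp
  also have "(\<Sum>i\<in>{Suc 1..<Suc (length xs)}. f ((x#xs) ! (i - 1)) ((x#xs) ! i) i)
      = (\<Sum>i\<in>{1..<length xs}. f ((x#xs) ! i) ((x#xs) ! Suc i) (Suc i))"
    by (subst sum.shift_bounds_Suc_ivl) simp
  also have "\<dots> = (\<Sum>i\<in>{1..<length xs}. f (xs ! (i - 1)) (xs ! i) (Suc i))"
    by (intro sum.cong) (auto simp: nth_Cons')
  finally show ?thesis using assms by (simp add: hd_conv_nth)
qed

lemma maj_Cons: "xs \<noteq> [] \<Longrightarrow> maj (x#xs) = maj xs + desc xs + (if x > hd xs then 1 else 0)"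
proof -
  assume ne: "xs \<noteq> []"
  have "maj (x#xs) = (if x > hd xs then 1 else 0) + (\<Sum>i\<in>{1..<length xs}. if xs ! (i - 1) > xs ! i then Suc i else 0)"
    unfolding maj_def using shift_sum[OF ne, of "\<lambda>a b i. if a > b then i else 0" x] by simp
  also have "(\<Sum>i\<in>{1..<length xs}. if xs ! (i - 1) > xs ! i then Suc i else 0)
     = (\<Sum>i\<in>{1..<length xs}. (if xs ! (i - 1) > xs ! i then i else 0) + (if xs ! (i - 1) > xs ! i then 1 else 0))"
    by (intro sum.cong) auto
  finally show ?thesis unfolding sum.distrib maj_def desc_def by simp
qed

lemma desc_Cons: "xs \<noteq> [] \<Longrightarrow> desc (x#xs) = desc xs + (if x > hd xs then 1 else 0)"
proof -
  assume ne: "xs \<noteq> []"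
  have "desc (x#xs) = (\<Sum>i\<in>{1..<length (x#xs)}. (\<lambda>a b (i::nat). if a > b then 1 else 0) ((x#xs)!(i-1)) ((x#xs)!i) i)"
    unfolding desc_def by simp
  also have "\<dots> = (\<lambda>a b (i::nat). if a > b then 1 else 0) x (hd xs) 1 + (\<Sum>i\<in>{1..<length xs}. (\<lambda>a b (i::nat). if a > b then 1 else 0) (xs ! (i - 1)) (xs ! i) (Suc i))"
    by (rule shift_sum[OF ne])
  finally show ?thesis by (simp add: desc_def)
qed

lemma runs_hd: "runs xs = r # rs \<Longrightarrow> hd r = hd xs"
  using runs_concat_eq[of xs] runs_nonempty[of r xs] by (cases r) auto

lemma runs_len_maj: "distinct xs \<Longrightarrow> xs \<noteq> [] \<Longrightarrow> length (runs xs) = desc xs + 1 \<and> maj xs = Phi (runs xs)"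
proof (induction xs)
  case Nil then show ?case by simp
next
  case (Cons x xs)
  show ?case
  proof (cases "xs = []")
    case True then show ?thesis by (simp add: maj_def desc_def)
  next
    case False
    then obtain r rs where R: "runs xs = r # rs" using runs_concat_eq[of xs] by (cases "runs xs") auto
    have hr: "hd r = hd xs" using runs_hd[OF R] .
    have IH: "length (runs xs) = desc xs + 1" "maj xs = Phi (runs xs)" using Cons False by auto
    have xne: "x \<noteq> hd xs" using Cons.prems False by (cases xs) auto
    show ?thesis
    proof (cases "x < hd xs")
      case True
      then show ?thesis using IH R hr False by (simp add: maj_Cons desc_Cons)
    next
      case False
      then have "x > hd xs" using xne by simp
      then show ?thesis using IH R hr \<open>xs \<noteq> []\<close> by (simp add: maj_Cons desc_Cons)
    qed
  qed
qed

lemma Phi_sum: "Phi R = (\<Sum>j<length R. length (R ! j) * (length R - 1 - j))"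
proof (induction R)
  case Nil then show ?case by simp
next
  case (Cons b R)
  show ?case by (simp add: sum.lessThan_Suc_shift Cons del: sum.lessThan_Suc)
qed



locale setting =
  fixes n k l :: nat and \<tau> :: "nat list"
  assumes perm: "is_perm_word n \<tau>" and len: "length (runs \<tau>) = k + 1" and lk: "l \<le> k"
begin

definition ri :: "nat \<Rightarrow> nat" where "ri x = run_idx \<tau> x"
definition dd :: "nat \<Rightarrow> int" where "dd x = int k - int (ri x) - int l"

lemma dist: "distinct \<tau>" and set_tau: "set \<tau> = {1..n}"
  using perm unfolding is_perm_word_def by auto

lemma R_mem: "j \<le> k \<Longrightarrow> runs \<tau> ! j \<in> set (runs \<tau>)"
  using len by simp

lemma R_props: "j \<le> k \<Longrightarrow> runs \<tau> ! j \<noteq> [] \<and> sorted_wrt (<) (runs \<tau> ! j) \<and> distinct (runs \<tau> ! j) \<and> set (runs \<tau> ! j) \<subseteq> {1..n}"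
proof -
  assume j: "j \<le> k"
  have m: "runs \<tau> ! j \<in> set (runs \<tau>)" using R_mem[OF j] .
  have "set (runs \<tau> ! j) \<subseteq> set (concat (runs \<tau>))" using m by auto
  then have "set (runs \<tau> ! j) \<subseteq> {1..n}" using runs_concat_eq[of \<tau>] set_tau by simp
  then show ?thesis using runs_nonempty[OF m] runs_sorted[OF m] strict_sorted_iff by blast
qed

lemma R_disj: "i \<le> k \<Longrightarrow> j \<le> k \<Longrightarrow> i \<noteq> j \<Longrightarrow> set (runs \<tau> ! i) \<inter> set (runs \<tau> ! j) = {}"
proof -
  assume ij: "i \<le> k" "j \<le> k" "i \<noteq> j"
  have dc: "distinct (concat (runs \<tau>))" using dist runs_concat_eq[of \<tau>] by simp
  have "[] \<notin> set (runs \<tau>)" using runs_nonempty[of _ \<tau>] by blast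
  then have "removeAll [] (runs \<tau>) = runs \<tau>" by (simp add: removeAll_id)
  then have "distinct (runs \<tau>)" using dc distinct_concat_iff by metis
  then have "runs \<tau> ! i \<noteq> runs \<tau> ! j" using ij len by (simp add: nth_eq_iff_index_eq)
  then show ?thesis using dc distinct_concat_iff R_mem ij by metis
qed

lemma ri_eq: "j \<le> k \<Longrightarrow> x \<in> set (runs \<tau> ! j) \<Longrightarrow> ri x = j"
  unfolding ri_def run_idx_def
proof (rule Least_equality)
  assume "j \<le> k" "x \<in> set (runs \<tau> ! j)"
  then show "j < length (runs \<tau>) \<and> x \<in> set (runs \<tau> ! j)" using len by simp
next
  fix y assume h: "j \<le> k" "x \<in> set (runs \<tau> ! j)" "y < length (runs \<tau>) \<and> x \<in> set (runs \<tau> ! y)"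
  show "j \<le> y"
  proof (rule ccontr)
    assume "\<not> j \<le> y"
    then show False using R_disj[of y j] h len by auto
  qed
qed

lemma ri_in: "x \<in> {1..n} \<Longrightarrow> ri x \<le> k \<and> x \<in> set (runs \<tau> ! ri x)"
proof -
  assume "x \<in> {1..n}"
  then have "x \<in> set (concat (runs \<tau>))" using runs_concat_eq[of \<tau>] set_tau by simp
  then obtain r where r: "r \<in> set (runs \<tau>)" "x \<in> set r" by auto
  then obtain j where "j < length (runs \<tau>)" "runs \<tau> ! j = r" by (meson in_set_conv_nth)
  then have "j < length (runs \<tau>)" "x \<in> set (runs \<tau> ! j)" using r by auto
  then show ?thesis using ri_eq[of j x] len by auto
qed

lemma mem_R: "j \<le> k \<Longrightarrow> x \<in> set (runs \<tau> ! j) \<longleftrightarrow> x \<in> {1..n} \<and> ri x = j"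
  using ri_eq ri_in R_props by blast

lemma ri_le: "x \<in> {1..n} \<Longrightarrow> ri x \<le> k" using ri_in by blast

definition kap :: "nat \<Rightarrow> nat \<times> int \<times> int" where
  "kap x = (if dd x = 0 then (0, 0, - int x) else if 0 < dd x then (1, dd x, - int x) else (2, - dd x, int x))"

lemma kap_inj: "kap x = kap y \<Longrightarrow> x = y"
  unfolding kap_def by (auto split: if_splits)

lemma card_R: "j \<le> k \<Longrightarrow> card {x \<in> set (runs \<tau> ! j). P x} = length (filter P (runs \<tau> ! j))"
  using R_props[of j] by (subst distinct_length_filter) (auto intro!: arg_cong[where f=card])

lemma dropWhile_filter: "sorted_wrt (<) xs \<Longrightarrow> c \<in> set xs \<Longrightarrow> dropWhile (\<lambda>x. x \<noteq> c) xs = filter (\<lambda>x. (c::nat) \<le> x) xs"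
proof (induction xs)
  case Nil then show ?case by simp
next
  case (Cons y ys)
  show ?case
  proof (cases "y = c")
    case True
    then have "filter (\<lambda>x. c \<le> x) ys = ys" using Cons.prems by (auto simp: filter_id_conv)
    then show ?thesis using True by simp
  next
    case False
    then have "y < c" using Cons.prems by auto
    then show ?thesis using Cons False by auto
  qed
qed

lemma sched_eq:
  assumes "c \<in> {1..n}"
  shows "sched l \<tau> c = (if k + 1 - l \<le> ri c then
       length (filter (\<lambda>x. x < c) (runs \<tau> ! ri c)) + length (filter (\<lambda>x. c < x) (runs \<tau> ! (ri c - 1)))
     else if ri c = k - l then length (filter (\<lambda>x. c \<le> x) (runs \<tau> ! ri c))
     else length (filter (\<lambda>x. c < x) (runs \<tau> ! ri c)) + length (filter (\<lambda>x. x < c) (runs \<tau> ! (ri c + 1))))"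
proof -
  have "ri c \<le> k" "c \<in> set (runs \<tau> ! ri c)" using ri_in[OF assms] by auto
  moreover have "sorted_wrt (<) (runs \<tau> ! ri c)" using R_props calculation by blast
  ultimately show ?thesis
    unfolding sched_def Let_def ri_def[symmetric] len
    using dropWhile_filter lk by (auto simp: Suc_diff_le)
qed

end



context setting begin

lemma dd_eq_iff: "dd x = dd y \<longleftrightarrow> ri x = ri y" unfolding dd_def by auto

lemma step_ground:
  fixes q :: "'a::comm_ring_1"
  assumes c: "c \<in> {1..n}" and d0: "dd c = 0"
  shows "GF dd {x\<in>{1..n}. kap x \<le> kap c} q = qint (sched l \<tau> c) q * GF dd ({x\<in>{1..n}. kap x \<le> kap c} - {c}) q"
proof -
  define A where "A = {x\<in>{1..n}. kap x \<le> kap c}"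
  have A: "A = {x\<in>{1..n}. dd x = 0 \<and> c \<le> x}"
    unfolding A_def using d0 by (auto simp: kap_def)
  have ric: "ri c = k - l" using d0 ri_le[OF c] lk unfolding dd_def by linarith
  have finA: "finite A" unfolding A by auto
  have cA: "c \<in> A" unfolding A using c d0 by auto
  have G: "GF dd A q = qint (card {x\<in>A. (dd x = dd c \<and> x \<noteq> c) \<or> (dd x = dd c - 1 \<and> x < c)}
                          + (if dd c = 0 then 1 else 0)) q * GF dd (A - {c}) q"
    by (rule GF_H[OF finA cA]) (auto simp: A d0)
  have "{x\<in>A. (dd x = dd c \<and> x \<noteq> c) \<or> (dd x = dd c - 1 \<and> x < c)} = A - {c}"
    unfolding A using d0 by auto
  then have "card {x\<in>A. (dd x = dd c \<and> x \<noteq> c) \<or> (dd x = dd c - 1 \<and> x < c)} + (if dd c = 0 then 1 else 0) = card A"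
  proof -
    have "A \<noteq> {}" using cA by auto
    then have "0 < card A" using finA card_gt_0_iff[of A] by blast
    then show ?thesis using d0 finA cA \<open>_ = A - {c}\<close> by simp
  qed
  moreover have "card A = sched l \<tau> c"
  proof -
    have "A = {x \<in> set (runs \<tau> ! (k - l)). c \<le> x}"
      unfolding A using mem_R[of "k - l"] ric dd_eq_iff[of _ c] d0 by auto
    then show ?thesis using card_R[of "k - l"] sched_eq[OF c] ric lk by auto
  qed
  ultimately have "GF dd A q = qint (sched l \<tau> c) q * GF dd (A - {c}) q" using G by simp
  then show ?thesis unfolding A_def .
qed


lemma step_higher:
  fixes q :: "'a::comm_ring_1"
  assumes c: "c \<in> {1..n}" and dpos: "0 < dd c"
  shows "GF dd {x\<in>{1..n}. kap x \<le> kap c} q = qint (sched l \<tau> c) q * GF dd ({x\<in>{1..n}. kap x \<le> kap c} - {c}) q"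
proof -
  define A where "A = {x\<in>{1..n}. kap x \<le> kap c}"
  define j where "j = ri c"
  have A: "A = {x\<in>{1..n}. 0 \<le> dd x \<and> (dd x < dd c \<or> (dd x = dd c \<and> c \<le> x))}"
    unfolding A_def using dpos by (auto simp: kap_def)
  have ric: "j < k - l" using dpos ri_le[OF c] lk unfolding dd_def j_def by linarith
  have finA: "finite A" unfolding A by auto
  have cA: "c \<in> A" unfolding A using c dpos by auto
  have G: "GF dd A q = qint (card {x\<in>A. (dd x = dd c \<and> x \<noteq> c) \<or> (dd x = dd c - 1 \<and> x < c)}
                          + (if dd c = 0 then 1 else 0)) q * GF dd (A - {c}) q"
    by (rule GF_H[OF finA cA]) (auto simp: A)
  have S: "{x\<in>A. (dd x = dd c \<and> x \<noteq> c) \<or> (dd x = dd c - 1 \<and> x < c)}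
     = {x \<in> set (runs \<tau> ! j). c < x} \<union> {x \<in> set (runs \<tau> ! (j + 1)). x < c}"
  proof -
    have "x \<in> set (runs \<tau> ! j) \<longleftrightarrow> x \<in> {1..n} \<and> dd x = dd c" for x
      using mem_R[of j x] ric unfolding j_def dd_def by auto
    moreover have "x \<in> set (runs \<tau> ! (j + 1)) \<longleftrightarrow> x \<in> {1..n} \<and> dd x = dd c - 1" for x
      using mem_R[of "j + 1" x] ric unfolding j_def dd_def by auto
    ultimately show ?thesis unfolding A using dpos by auto
  qed
  have "card {x\<in>A. (dd x = dd c \<and> x \<noteq> c) \<or> (dd x = dd c - 1 \<and> x < c)} + (if dd c = 0 then 1 else 0)
      = sched l \<tau> c"
  proof -
    have "card ({x \<in> set (runs \<tau> ! j). c < x} \<union> {x \<in> set (runs \<tau> ! (j + 1)). x < c})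
        = card {x \<in> set (runs \<tau> ! j). c < x} + card {x \<in> set (runs \<tau> ! (j + 1)). x < c}"
      using R_disj[of j "j+1"] ric by (intro card_Un_disjoint) auto
    then show ?thesis unfolding S using dpos card_R[of j] card_R[of "j+1"] sched_eq[OF c] ric
      unfolding j_def by auto
  qed
  then have "GF dd A q = qint (sched l \<tau> c) q * GF dd (A - {c}) q" using G by simp
  then show ?thesis unfolding A_def .
qed

lemma step_lower:
  fixes q :: "'a::comm_ring_1"
  assumes c: "c \<in> {1..n}" and dneg: "dd c < 0"
  shows "GF dd {x\<in>{1..n}. kap x \<le> kap c} q = qint (sched l \<tau> c) q * GF dd ({x\<in>{1..n}. kap x \<le> kap c} - {c}) q"
proof -
  define A where "A = {x\<in>{1..n}. kap x \<le> kap c}"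
  define j where "j = ri c"
  have A: "A = {x\<in>{1..n}. dd c < dd x \<or> (dd x = dd c \<and> x \<le> c)}"
    unfolding A_def using dneg by (auto simp: kap_def)
  have ric: "k - l < j" "j \<le> k" using dneg ri_le[OF c] lk unfolding dd_def j_def by linarith+
  have finA: "finite A" unfolding A by auto
  have cA: "c \<in> A" unfolding A using c by auto
  have G: "GF dd A q = qint (card {x\<in>A. (dd x = dd c \<and> x \<noteq> c) \<or> (dd x = dd c + 1 \<and> c < x)}) q * GF dd (A - {c}) q"
    by (rule GF_L[OF finA cA]) (use dneg in \<open>auto simp: A\<close>)
  have S: "{x\<in>A. (dd x = dd c \<and> x \<noteq> c) \<or> (dd x = dd c + 1 \<and> c < x)}
     = {x \<in> set (runs \<tau> ! j). x < c} \<union> {x \<in> set (runs \<tau> ! (j - 1)). c < x}"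
  proof -
    have "x \<in> set (runs \<tau> ! j) \<longleftrightarrow> x \<in> {1..n} \<and> dd x = dd c" for x
      using mem_R[of j x] ric unfolding j_def dd_def by auto
    moreover have "x \<in> set (runs \<tau> ! (j - 1)) \<longleftrightarrow> x \<in> {1..n} \<and> dd x = dd c + 1" for x
      using mem_R[of "j - 1" x] ric ri_le[of x] unfolding j_def dd_def by auto
    ultimately show ?thesis unfolding A by auto
  qed
  have "card {x\<in>A. (dd x = dd c \<and> x \<noteq> c) \<or> (dd x = dd c + 1 \<and> c < x)} = sched l \<tau> c"
  proof -
    have "card ({x \<in> set (runs \<tau> ! j). x < c} \<union> {x \<in> set (runs \<tau> ! (j - 1)). c < x})
        = card {x \<in> set (runs \<tau> ! j). x < c} + card {x \<in> set (runs \<tau> ! (j - 1)). c < x}"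
      using R_disj[of j "j - 1"] ric by (intro card_Un_disjoint) auto
    then show ?thesis unfolding S using card_R[of j] card_R[of "j - 1"] sched_eq[OF c] ric
      unfolding j_def by auto
  qed
  then have "GF dd A q = qint (sched l \<tau> c) q * GF dd (A - {c}) q" using G by simp
  then show ?thesis unfolding A_def .
qed

lemma step:
  fixes q :: "'a::comm_ring_1"
  assumes c: "c \<in> {1..n}"
  shows "GF dd {x\<in>{1..n}. kap x \<le> kap c} q = qint (sched l \<tau> c) q * GF dd ({x\<in>{1..n}. kap x \<le> kap c} - {c}) q"
proof -
  consider "dd c = 0" | "0 < dd c" | "dd c < 0" by linarith
  then show ?thesis
  proof cases
    case 1 then show ?thesis by (rule step_ground[OF c])
  next
    case 2 then show ?thesis by (rule step_higher[OF c])
  next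
    case 3 then show ?thesis by (rule step_lower[OF c])
  qed
qed

lemma GF_prod_down:
  fixes q :: "'a::comm_ring_1"
  shows "A \<subseteq> {1..n} \<Longrightarrow> (\<forall>x\<in>{1..n}. \<forall>y\<in>A. kap x \<le> kap y \<longrightarrow> x \<in> A) \<Longrightarrow>
     GF dd A q = (\<Prod>c\<in>A. qint (sched l \<tau> c) q)"
proof (induction "card A" arbitrary: A)
  case 0
  then have "A = {}" using finite_subset[of A "{1..n}"] by auto
  then show ?case by (simp add: GF_empty)
next
  case (Suc m)
  have finA: "finite A" using Suc.prems finite_subset by blast
  then have "A \<noteq> {}" using Suc.hyps by auto
  then have "Max (kap ` A) \<in> kap ` A" using finA by auto
  then obtain c where cA: "c \<in> A" and cmax: "kap c = Max (kap ` A)" by auto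
  have le: "kap y \<le> kap c" if "y \<in> A" for y using finA that cmax by auto
  have c: "c \<in> {1..n}" using cA Suc.prems by auto
  have Aeq: "A = {x\<in>{1..n}. kap x \<le> kap c}" using Suc.prems le cA by auto
  have IH: "GF dd (A - {c}) q = (\<Prod>c\<in>A - {c}. qint (sched l \<tau> c) q)"
  proof (rule Suc.hyps(1))
    show "m = card (A - {c})" using Suc.hyps(2) finA cA by simp
    show "A - {c} \<subseteq> {1..n}" using Suc.prems by auto
    show "\<forall>x\<in>{1..n}. \<forall>y\<in>A - {c}. kap x \<le> kap y \<longrightarrow> x \<in> A - {c}"
    proof (intro ballI impI)
      fix x y assume h: "x \<in> {1..n}" "y \<in> A - {c}" "kap x \<le> kap y"
      then have "x \<in> A" using Suc.prems by auto
      moreover have "x \<noteq> c"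
      proof
        assume "x = c"
        then have "kap y = kap c" using h le[of y] by auto
        then show False using kap_inj h by auto
      qed
      ultimately show "x \<in> A - {c}" by auto
    qed
  qed
  have "GF dd A q = qint (sched l \<tau> c) q * GF dd (A - {c}) q"
    using step[OF c] Aeq by simp
  also have "\<dots> = (\<Prod>c\<in>A. qint (sched l \<tau> c) q)"
    using IH finA cA by (simp add: prod.remove)
  finally show ?case .
qed

lemma GF_prod: "GF dd {1..n} (q::'a::comm_ring_1) = (\<Prod>c\<in>{1..n}. qint (sched l \<tau> c) q)"
  by (rule GF_prod_down) auto

end


lemma valid_nth: "valid D w \<Longrightarrow> Suc r < length w \<Longrightarrow> goodstep D (w!r) (w!Suc r)"
  unfolding valid_def using successively_nth by blast

lemma valid_upper: "valid D w \<Longrightarrow> r < length w \<Longrightarrow> D (w!r) \<le> int r"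
proof (induction r)
  case 0 then show ?case unfolding valid_def by (cases w) auto
next
  case (Suc r)
  then have "D (w ! Suc r) \<le> D (w!r) + 1" using valid_nth[OF Suc.prems(1)] unfolding goodstep_def by auto
  then show ?case using Suc by auto
qed

lemma valid_lower_aux: "valid D w \<Longrightarrow> m < length w \<Longrightarrow> D (w!(length w - 1 - m)) \<ge> - int m"
proof (induction m)
  case 0 then show ?case unfolding valid_def by (cases w rule: rev_cases) auto
next
  case (Suc m)
  have "Suc (length w - 1 - Suc m) = length w - 1 - m" "Suc (length w - 1 - Suc m) < length w" using Suc.prems by auto
  then have "D (w ! (length w - 1 - m)) \<le> D (w!(length w - 1 - Suc m)) + 1"
    using valid_nth[OF Suc.prems(1), of "length w - 1 - Suc m"] unfolding goodstep_def by auto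
  then show ?case using Suc by auto
qed

lemma valid_lower: "valid D w \<Longrightarrow> r < length w \<Longrightarrow> D (w!r) \<ge> int r + 1 - int (length w)"
proof -
  assume h: "valid D w" "r < length w"
  have e: "length w - 1 - (length w - 1 - r) = r" using h by auto
  have "D (w!(length w - 1 - (length w - 1 - r))) \<ge> - int (length w - 1 - r)"
    using valid_lower_aux[OF h(1), of "length w - 1 - r"] h by auto
  then have "D (w!r) \<ge> - int (length w - 1 - r)" unfolding e .
  moreover have "int (length w - 1 - r) = int (length w) - 1 - int r" using h by auto
  ultimately show ?thesis by linarith
qed

lemma valid_cross:
  "valid D w \<Longrightarrow> s < t \<Longrightarrow> t < length w \<Longrightarrow> D (w!s) \<le> v \<Longrightarrow> v < D (w!t) \<Longrightarrow>
   \<exists>r. s \<le> r \<and> r < t \<and> D (w!r) = v \<and> D (w!Suc r) = v + 1 \<and> w!r < w!Suc r"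
proof (induction t)
  case 0 then show ?case by simp
next
  case (Suc t)
  have g: "goodstep D (w!t) (w!Suc t)" using valid_nth Suc.prems by blast
  show ?case
  proof (cases "D (w!t) \<le> v")
    case True
    then have "D (w!t) = v" "D (w!Suc t) = v + 1" using g Suc.prems unfolding goodstep_def by auto
    then show ?thesis using g Suc.prems unfolding goodstep_def by (intro exI[of _ t]) auto
  next
    case False
    then have "s < t" using Suc.prems by (metis less_SucE)
    then show ?thesis using Suc False by fastforce
  qed
qed

lemma rank_lemma:
  fixes key :: "nat \<Rightarrow> 'b::linorder"
  assumes "sorted_wrt (\<lambda>a b. key a < key b) w" "i < length w"
  shows "card {x \<in> set w. key x < key (w!i)} = i"
proof -
  have dk: "distinct (map key w)" using assms(1) strict_sorted_iff[of "map key w"] by (simp add: sorted_wrt_map)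
  then have dw: "distinct w" by (simp add: distinct_map)
  have "{x \<in> set w. key x < key (w!i)} = set (take i w)"
  proof (intro equalityI subsetI)
    fix x assume "x \<in> {x \<in> set w. key x < key (w!i)}"
    then obtain j where j: "j < length w" "w!j = x" "key (w!j) < key (w!i)" by (auto simp: in_set_conv_nth)
    have "j < i"
    proof (rule ccontr)
      assume "\<not> j < i"
      then have "j = i \<or> i < j" by auto
      then show False using j sorted_wrt_nth_less[OF assms(1), of i j] by auto
    qed
    then show "x \<in> set (take i w)" using j by (auto simp: in_set_conv_nth)
  next
    fix x assume "x \<in> set (take i w)"
    then obtain j where j: "j < i" "w!j = x" using assms(2) by (auto simp: in_set_conv_nth)
    then show "x \<in> {x \<in> set w. key x < key (w!i)}"
      using sorted_wrt_nth_less[OF assms(1) j(1) assms(2)] assms(2) by auto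
  qed
  then show ?thesis using dw assms(2) by (simp add: distinct_card)
qed

fun pos :: "nat list \<Rightarrow> nat \<Rightarrow> nat" where
  "pos [] c = 0"
| "pos (x # xs) c = (if x = c then 0 else Suc (pos xs c))"

lemma pos_nth: "c \<in> set xs \<Longrightarrow> pos xs c < length xs \<and> xs ! pos xs c = c"
  by (induction xs) auto

lemma pos_of_nth: "distinct xs \<Longrightarrow> i < length xs \<Longrightarrow> pos xs (xs!i) = i"
proof (induction xs arbitrary: i)
  case Nil then show ?case by simp
next
  case (Cons x xs)
  then show ?case by (cases i) auto
qed

definition Fw :: "(nat \<Rightarrow> int) \<Rightarrow> nat \<Rightarrow> nat list \<Rightarrow> nat \<Rightarrow> nat" where
  "Fw D n w = (\<lambda>c. if c \<in> {1..n} then nat (int (pos w c) - D c) + 1 else undefined)"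

lemma car_row_lex: "car_row n f i = card {c \<in> {1..n}. (f c, c) < (f i, i)}"
  unfolding car_row_def by (intro arg_cong[where f=card]) auto

lemma Fw_props:
  assumes v: "valid D w" and d: "distinct w" and s: "set w = {1..n}"
  shows "Fw D n w \<in> pref_fns n" "\<And>c. c \<in> {1..n} \<Longrightarrow> car_row n (Fw D n w) c = pos w c"
    "\<And>c. c \<in> {1..n} \<Longrightarrow> car_diag n (Fw D n w) c = D c"
    "sorted_wrt (\<lambda>a b. (Fw D n w a, a) < (Fw D n w b, b)) w"
proof -
  define F where "F = Fw D n w"
  have ln: "length w = n" using d s distinct_card by fastforce
  have Fr: "int (F (w!r)) = int r - D (w!r) + 1" if "r < n" for r
  proof -
    have "w!r \<in> {1..n}" using s that ln nth_mem by blast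
    moreover have "pos w (w!r) = r" using pos_of_nth d that ln by simp
    moreover have "D (w!r) \<le> int r" using valid_upper v that ln by simp
    ultimately show ?thesis unfolding F_def Fw_def by simp
  qed
  have Frange: "1 \<le> F (w!r) \<and> F (w!r) \<le> n" if "r < n" for r
  proof -
    have "D (w!r) \<le> int r" using valid_upper v that ln by simp
    moreover have "D (w!r) \<ge> int r + 1 - int n" using valid_lower v that ln by fastforce
    ultimately show ?thesis using Fr[OF that] that by linarith
  qed
  show "Fw D n w \<in> pref_fns n"
    unfolding pref_fns_def
  proof (rule PiE_I)
    fix c assume "c \<in> {1..n}"
    then obtain r where "r < n" "w!r = c" using s ln by (metis in_set_conv_nth)
    then show "Fw D n w c \<in> {1..n}" using Frange F_def by auto
  next
    fix c assume h: "c \<notin> {1..n}"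
    have "\<not> (1 \<le> c \<and> c \<le> n)" using h by simp
    then show "Fw D n w c = undefined" unfolding Fw_def by (simp only: atLeastAtMost_iff if_False)
  qed
  have srt: "sorted_wrt (\<lambda>a b. (F a, a) < (F b, b)) w"
  proof (subst sorted_wrt_iff_nth_Suc_transp)
    show "transp (\<lambda>a b. (F a, a) < (F b, b))" by (auto simp: transp_def)
    show "\<forall>i. Suc i < length w \<longrightarrow> (F (w ! i), w ! i) < (F (w ! Suc i), w ! Suc i)"
    proof (intro allI impI)
      fix i assume i: "Suc i < length w"
      have g: "goodstep D (w!i) (w!Suc i)" using valid_nth v i by blast
      have "int (F (w!i)) = int i - D (w!i) + 1" "int (F (w!Suc i)) = int (Suc i) - D (w!Suc i) + 1"
        using Fr i ln by auto
      then show "(F (w ! i), w ! i) < (F (w ! Suc i), w ! Suc i)"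
        using g unfolding goodstep_def by auto
    qed
  qed
  then show "sorted_wrt (\<lambda>a b. (Fw D n w a, a) < (Fw D n w b, b)) w" unfolding F_def .
  have cr: "car_row n F c = pos w c" if "c \<in> {1..n}" for c
  proof -
    have p: "pos w c < length w" "w ! pos w c = c" using pos_nth that s by auto
    have "car_row n F c = card {x \<in> set w. (F x, x) < (F (w ! pos w c), w ! pos w c)}"
      unfolding car_row_lex s p by simp
    also have "\<dots> = pos w c" by (rule rank_lemma[OF srt p(1)])
    finally show ?thesis .
  qed
  then show "\<And>c. c \<in> {1..n} \<Longrightarrow> car_row n (Fw D n w) c = pos w c" unfolding F_def .
  show "car_diag n (Fw D n w) c = D c" if "c \<in> {1..n}" for c
  proof -
    have p: "pos w c < n" "w ! pos w c = c" using pos_nth that s ln by auto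
    show ?thesis using Fr[OF p(1)] cr[OF that] p unfolding car_diag_def F_def by simp
  qed
qed

lemma G_props:
  assumes f: "f \<in> pref_fns n"
  defines "w \<equiv> sort_key (\<lambda>c. (f c, c)) [1..<n+1]"
  shows "distinct w" "set w = {1..n}" "valid (car_diag n f) w" "Fw (car_diag n f) n w = f"
    "sorted_wrt (\<lambda>a b. (f a, a) < (f b, b)) w"
proof -
  show dw: "distinct w" "set w = {1..n}" unfolding w_def by auto
  have ln: "length w = n" unfolding w_def by simp
  have fr: "f c \<in> {1..n}" if "c \<in> {1..n}" for c using f that unfolding pref_fns_def by auto
  have "sorted (map (\<lambda>c. (f c, c)) w)" unfolding w_def by simp
  moreover have "distinct (map (\<lambda>c. (f c, c)) w)" using dw by (simp add: distinct_map inj_on_def)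
  ultimately have "sorted_wrt (<) (map (\<lambda>c. (f c, c)) w)" using strict_sorted_iff by blast
  then show srt: "sorted_wrt (\<lambda>a b. (f a, a) < (f b, b)) w" by (simp add: sorted_wrt_map)
  have row: "car_row n f (w!r) = r" if "r < n" for r
    unfolding car_row_lex using rank_lemma[OF srt, of r] that ln dw by simp
  have dg: "car_diag n f (w!r) = int r - int (f (w!r)) + 1" if "r < n" for r
    using row[OF that] unfolding car_diag_def by simp
  have wr: "w!r \<in> {1..n}" if "r < n" for r using that ln dw nth_mem by blast
  show "valid (car_diag n f) w"
    unfolding valid_def
  proof (intro conjI impI)
    show "successively (goodstep (car_diag n f)) w"
      unfolding successively_conv_nth
    proof (intro allI impI)
      fix i assume i: "Suc i < length w"
      have "(f (w!i), w!i) < (f (w!Suc i), w!Suc i)" using sorted_wrt_nth_less[OF srt, of i "Suc i"] i by simp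
      then show "goodstep (car_diag n f) (w ! i) (w ! Suc i)"
        unfolding goodstep_def using dg[of i] dg[of "Suc i"] i ln by auto
    qed
    assume ne: "w \<noteq> []"
    then have n0: "0 < n" using ln by auto
    show "car_diag n f (hd w) \<le> 0" using dg[OF n0] fr[OF wr[OF n0]] ne by (simp add: hd_conv_nth)
    show "0 \<le> car_diag n f (last w)"
      using dg[of "n - 1"] fr[OF wr[of "n - 1"]] ne n0 ln by (simp add: last_conv_nth)
  qed
  show "Fw (car_diag n f) n w = f"
  proof
    fix c
    show "Fw (car_diag n f) n w c = f c"
    proof (cases "c \<in> {1..n}")
      case True
      then have p: "pos w c < n" "w ! pos w c = c" using pos_nth dw ln by auto
      have "nat (int (pos w c) - car_diag n f c) = f c - 1" using dg[OF p(1)] p(2) fr[OF True] by simp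
      then show ?thesis using fr[OF True] True unfolding Fw_def by simp
    next
      case False then show ?thesis using f unfolding Fw_def pref_fns_def by (auto simp: PiE_def extensional_def)
    qed
  qed
qed



lemma concat_sorted_key:
  fixes g :: "nat \<Rightarrow> nat"
  shows "(\<forall>i<length Bs. \<forall>x\<in>set (Bs!i). g x = i + off) \<Longrightarrow> (\<forall>b\<in>set Bs. sorted_wrt (<) b) \<Longrightarrow>
    sorted_wrt (\<lambda>a b. g a < g b \<or> (g a = g b \<and> a < b)) (concat Bs)"
proof (induction Bs arbitrary: off)
  case Nil then show ?case by simp
next
  case (Cons b Bs)
  have gb: "\<forall>x\<in>set b. g x = off" using Cons.prems(1) by force
  have gB: "\<forall>i<length Bs. \<forall>x\<in>set (Bs!i). g x = i + Suc off" using Cons.prems(1) by fastforce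
  have IH: "sorted_wrt (\<lambda>a b. g a < g b \<or> (g a = g b \<and> a < b)) (concat Bs)"
    using Cons.IH[OF gB] Cons.prems(2) by simp
  have sb: "sorted_wrt (\<lambda>a b. g a < g b \<or> (g a = g b \<and> a < b)) b"
    using Cons.prems(2) gb by (auto intro: sorted_wrt_mono_rel[of _ "(<)"])
  have cross: "\<forall>x\<in>set b. \<forall>y\<in>set (concat Bs). g x < g y"
  proof (intro ballI)
    fix x y assume "x \<in> set b" "y \<in> set (concat Bs)"
    then obtain bb where bb: "bb \<in> set Bs" "y \<in> set bb" by auto
    then obtain i where "i < length Bs" "Bs ! i = bb" by (meson in_set_conv_nth)
    then have "i < length Bs" "y \<in> set (Bs!i)" using bb by auto
    then show "g x < g y" using gB gb \<open>x \<in> set b\<close> by auto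
  qed
  show ?case using IH sb cross by (auto simp: sorted_wrt_append)
qed

lemma valid_cong: "(\<And>c. c \<in> set w \<Longrightarrow> D c = D' c) \<Longrightarrow> valid D w = valid D' w"
  unfolding valid_def goodstep_def
  by (intro arg_cong2[where f="(\<and>)"] successively_cong) auto

lemma wdinv_card:
  "distinct w \<Longrightarrow> wdinv D w = card {(a, b). a \<in> set w \<and> b \<in> set w \<and> pos w a < pos w b \<and> dp D a b}"
proof (induction w)
  case Nil then show ?case by simp
next
  case (Cons x xs)
  have e: "{(a, b). a \<in> set (x#xs) \<and> b \<in> set (x#xs) \<and> pos (x#xs) a < pos (x#xs) b \<and> dp D a b}
    = (\<lambda>b. (x, b)) ` {b \<in> set xs. dp D x b} \<union> {(a, b). a \<in> set xs \<and> b \<in> set xs \<and> pos xs a < pos xs b \<and> dp D a b}"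
    using Cons.prems by (auto split: if_splits)
  have "card ((\<lambda>b. (x, b)) ` {b \<in> set xs. dp D x b} \<union> {(a, b). a \<in> set xs \<and> b \<in> set xs \<and> pos xs a < pos xs b \<and> dp D a b})
      = card ((\<lambda>b. (x, b)) ` {b \<in> set xs. dp D x b}) + card {(a, b). a \<in> set xs \<and> b \<in> set xs \<and> pos xs a < pos xs b \<and> dp D a b}"
  proof (rule card_Un_disjoint)
    show "finite ((\<lambda>b. (x, b)) ` {b \<in> set xs. dp D x b})" by auto
    show "finite {(a, b). a \<in> set xs \<and> b \<in> set xs \<and> pos xs a < pos xs b \<and> dp D a b}"
      by (rule finite_subset[of _ "set xs \<times> set xs"]) auto
    show "(\<lambda>b. (x, b)) ` {b \<in> set xs. dp D x b} \<inter> {(a, b). a \<in> set xs \<and> b \<in> set xs \<and> pos xs a < pos xs b \<and> dp D a b} = {}"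
      using Cons.prems by auto
  qed
  moreover have "card ((\<lambda>b. (x, b)) ` {b \<in> set xs. dp D x b}) = length (filter (dp D x) xs)"
    using Cons.prems by (subst card_image) (auto simp: inj_on_def distinct_length_filter intro!: arg_cong[where f=card])
  ultimately show ?case using e Cons by simp
qed

context setting begin

lemma tau_sorted: "sorted (map (\<lambda>c. (- dd c, c)) \<tau>)"
proof -
  have "sorted_wrt (\<lambda>a b. ri a < ri b \<or> (ri a = ri b \<and> a < b)) (concat (runs \<tau>))"
  proof (rule concat_sorted_key[where off=0])
    show "\<forall>i<length (runs \<tau>). \<forall>x\<in>set (runs \<tau> ! i). ri x = i + 0" using ri_eq len by auto
    show "\<forall>b\<in>set (runs \<tau>). sorted_wrt (<) b" using runs_sorted by blast
  qed
  then have "sorted_wrt (\<lambda>a b. ri a < ri b \<or> (ri a = ri b \<and> a < b)) \<tau>" using runs_concat_eq by simp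
  then have "sorted_wrt (\<lambda>a b. (- dd a, a) \<le> (- dd b, b)) \<tau>"
    by (rule sorted_wrt_mono_rel[rotated]) (auto simp: dd_def)
  then show ?thesis by (simp add: sorted_map)
qed

lemma tau_ne: "\<tau> \<noteq> []" using len runs_concat_eq[of \<tau>] by auto

lemma n_pos: "1 \<le> n"
proof -
  obtain a where "a \<in> set \<tau>" using tau_ne by (cases \<tau>) auto
  then show ?thesis using set_tau by auto
qed

end


context setting begin

lemma structural:
  assumes v: "valid D w" and d: "distinct w" and s: "set w = {1..n}"
    and dw: "sort_key (\<lambda>c. (- D c, c)) [1..<n+1] = \<tau>"
    and dev: "Max ((\<lambda>c. - D c) ` {1..n}) = int l"
  shows "\<forall>c\<in>{1..n}. D c = dd c"
proof -
  have ln: "length w = n" using d s distinct_card by fastforce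
  have n1: "1 \<le> n" by (rule n_pos)
  have fin: "finite {1..n}" "{1..n} \<noteq> {}" using n1 by auto
  have lo1: "- D c \<le> int l" if "c \<in> {1..n}" for c
    using dev fin that by (metis Max_ge finite_imageI image_eqI)
  have "Max ((\<lambda>c. - D c) ` {1..n}) \<in> (\<lambda>c. - D c) ` {1..n}" using fin by (intro Max_in) auto
  then obtain cl where cl: "cl \<in> {1..n}" "- D cl = int l" using dev by auto
  define hi where "hi = Max (D ` {1..n})"
  have hi1: "D c \<le> hi" if "c \<in> {1..n}" for c using fin that unfolding hi_def by auto
  have "hi \<in> D ` {1..n}" using fin unfolding hi_def by (intro Max_in) auto
  then obtain ch where ch: "ch \<in> {1..n}" "D ch = hi" by auto
  define pl where "pl = pos w cl"
  define ph where "ph = pos w ch"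
  have pl: "pl < n" "w!pl = cl" using pos_nth[of cl w] cl s ln unfolding pl_def by auto
  have ph: "ph < n" "w!ph = ch" using pos_nth[of ch w] ch s ln unfolding ph_def by auto
  have wC: "w!r \<in> {1..n}" if "r < n" for r using that s ln nth_mem by blast
  have hd0: "D (w!0) \<le> 0" using v n1 ln unfolding valid_def by (cases w) auto
  have last0: "0 \<le> D (w!(n-1))" using v n1 ln unfolding valid_def by (auto simp: last_conv_nth)
  have cross: "\<exists>a\<in>{1..n}. \<exists>b\<in>{1..n}. D a = v + 1 \<and> D b = v \<and> b < a" if "- int l \<le> v" "v < hi" for v
  proof -
    have "\<exists>st tt. st < tt \<and> tt < n \<and> D (w!st) \<le> v \<and> v < D (w!tt)"
    proof (cases "pl < ph")
      case True then show ?thesis using pl ph cl ch that by (intro exI[of _ pl] exI[of _ ph]) auto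
    next
      case False
      show ?thesis
      proof (cases "0 \<le> v")
        case True
        have "0 \<noteq> ph" using hd0 ph ch that True by (cases ph) auto
        then have "0 < ph \<and> ph < n \<and> D (w!0) \<le> v \<and> v < D (w!ph)" using hd0 ph ch that True by auto
        then show ?thesis by blast
      next
        case False
        have "pl \<noteq> n - 1" using last0 pl cl that False by auto
        then show ?thesis using last0 pl cl that False by (intro exI[of _ pl] exI[of _ "n-1"]) auto
      qed
    qed
    then obtain st tt where "st < tt" "tt < n" "D (w!st) \<le> v" "v < D (w!tt)" by blast
    then obtain r where r: "r < tt" "D (w!r) = v" "D (w!Suc r) = v + 1" "w!r < w!Suc r"
      using valid_cross[OF v, of st tt v] ln by auto
    show ?thesis using r \<open>tt < n\<close> wC[of r] wC[of "Suc r"] by (intro bexI[of _ "w!Suc r"] bexI[of _ "w!r"]) auto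
  qed
  have interval: "\<exists>c\<in>{1..n}. D c = v" if "- int l \<le> v" "v \<le> hi" for v
  proof (cases "v = hi")
    case True then show ?thesis using ch by auto
  next
    case False then show ?thesis using cross[of v] that by force
  qed
  have hil: "- int l \<le> hi" using lo1[OF ch(1)] ch by simp
  define N where "N = nat (hi + int l) + 1"
  define B where "B i = sorted_list_of_set {c\<in>{1..n}. D c = hi - int i}" for i
  define Bs where "Bs = map B [0..<N]"
  have setB: "set (B i) = {c\<in>{1..n}. D c = hi - int i}" for i unfolding B_def by simp
  have Bne: "B i \<noteq> []" if "i < N" for i
  proof -
    have "- int l \<le> hi - int i" "hi - int i \<le> hi" using that hil unfolding N_def by auto
    then obtain c where "c \<in> {1..n}" "D c = hi - int i" using interval by blast
    then show ?thesis using setB[of i] by auto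
  qed
  have Bsrt: "sorted_wrt (<) (B i)" for i unfolding B_def using strict_sorted_list_of_set by blast
  define g where "g c = nat (hi - D c)" for c
  have gB: "\<forall>i<length Bs. \<forall>x\<in>set (Bs!i). g x = i + 0" unfolding Bs_def g_def using setB by auto
  have "sorted_wrt (\<lambda>a b. g a < g b \<or> (g a = g b \<and> a < b)) (concat Bs)"
    by (rule concat_sorted_key[OF gB]) (auto simp: Bs_def Bsrt)
  moreover have "set (concat Bs) \<subseteq> {1..n}" unfolding Bs_def using setB by auto
  moreover have gle: "(g a < g b \<longrightarrow> - D a < - D b) \<and> (g a = g b \<longrightarrow> D a = D b)"
    if "a \<in> {1..n}" "b \<in> {1..n}" for a b using hi1[OF that(1)] hi1[OF that(2)] unfolding g_def by auto
  ultimately have srt: "sorted_wrt (\<lambda>a b. (- D a, a) < (- D b, b)) (concat Bs)"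
  proof (elim sorted_wrt_mono_rel[rotated])
    fix a b assume h: "a \<in> set (concat Bs)" "b \<in> set (concat Bs)" "g a < g b \<or> g a = g b \<and> a < b"
    then have "a \<in> {1..n}" "b \<in> {1..n}" using \<open>set (concat Bs) \<subseteq> {1..n}\<close> by auto
    from gle[OF this] h(3) show "(- D a, a) < (- D b, b)" by auto
  qed
  then have "distinct (map (\<lambda>c. (- D c, c)) (concat Bs))" "sorted (map (\<lambda>c. (- D c, c)) (concat Bs))"
    using strict_sorted_iff[of "map (\<lambda>c. (- D c, c)) (concat Bs)"] by (auto simp: sorted_wrt_map)
  then have dB: "distinct (concat Bs)" and sB: "sorted (map (\<lambda>c. (- D c, c)) (concat Bs))"
    by (auto simp: distinct_map)
  have setBs: "set (concat Bs) = {1..n}"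
  proof (intro equalityI subsetI)
    fix c assume "c \<in> set (concat Bs)" then show "c \<in> {1..n}" unfolding Bs_def using setB by auto
  next
    fix c assume c: "c \<in> {1..n}"
    define i where "i = nat (hi - D c)"
    have "i < N" "D c = hi - int i" using hi1[OF c] lo1[OF c] unfolding i_def N_def by auto
    then show "c \<in> set (concat Bs)" using c setB[of i] unfolding Bs_def by force
  qed
  have tauB: "\<tau> = concat Bs"
    unfolding dw[symmetric]
  proof (rule sort_key_inj_key_eq)
    show "mset [1..<n+1] = mset (concat Bs)"
      using dB setBs set_eq_iff_mset_eq_distinct[of "[1..<n+1]" "concat Bs"] by auto
    show "inj_on (\<lambda>c. (- D c, c)) (set [1..<n + 1])" by (auto simp: inj_on_def)
    show "sorted (map (\<lambda>c. (- D c, c)) (concat Bs))" by (rule sB)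
  qed
  have runsB: "runs \<tau> = Bs"
    unfolding tauB
  proof (rule runs_concat)
    show "\<forall>b\<in>set Bs. b \<noteq> [] \<and> sorted_wrt (<) b" unfolding Bs_def using Bne Bsrt by auto
    show "successively (\<lambda>a b. \<exists>x\<in>set a. \<exists>y\<in>set b. y < x) Bs"
      unfolding successively_conv_nth
    proof (intro allI impI)
      fix i assume i: "Suc i < length Bs"
      then have "Suc i < N" unfolding Bs_def by simp
      then have "- int l \<le> hi - int i - 1" "hi - int i - 1 < hi" unfolding N_def by auto
      then obtain a b where ab: "a \<in> {1..n}" "b \<in> {1..n}" "D a = hi - int i - 1 + 1" "D b = hi - int i - 1" "b < a"
        using cross by blast
      have "Bs ! i = B i" "Bs ! Suc i = B (Suc i)" using \<open>Suc i < N\<close> unfolding Bs_def by (auto simp del: upt_Suc)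
      moreover have "a \<in> set (B i)" "b \<in> set (B (Suc i))" using ab setB by auto
      ultimately show "\<exists>x\<in>set (Bs ! i). \<exists>y\<in>set (Bs ! Suc i). y < x" using ab(5) by auto
    qed
  qed
  have NK: "N = k + 1" using runsB len unfolding Bs_def by simp
  show ?thesis
  proof
    fix c assume c: "c \<in> {1..n}"
    define i where "i = nat (hi - D c)"
    have i: "i < N" "D c = hi - int i" using hi1[OF c] lo1[OF c] unfolding i_def N_def by auto
    then have "c \<in> set (runs \<tau> ! i)" using c setB[of i] runsB unfolding Bs_def by auto
    then have "ri c = i" using ri_eq i NK by auto
    then show "D c = dd c" using i NK hil unfolding dd_def N_def by auto
  qed
qed

end


context setting begin

lemma dev_dd: "Max ((\<lambda>c. - dd c) ` {1..n}) = int l"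
proof (rule Max_eqI)
  show "finite ((\<lambda>c. - dd c) ` {1..n})" by auto
  show "y \<le> int l" if "y \<in> (\<lambda>c. - dd c) ` {1..n}" for y
    using that ri_le unfolding dd_def by force
  have ne: "runs \<tau> ! k \<noteq> []" using R_props by blast
  define c where "c = hd (runs \<tau> ! k)"
  have "c \<in> set (runs \<tau> ! k)" using ne unfolding c_def by simp
  then have "c \<in> {1..n}" "ri c = k" using mem_R[of k c] by auto
  then show "int l \<in> (\<lambda>c. - dd c) ` {1..n}" unfolding dd_def by force
qed

lemma F_facts:
  assumes w: "w \<in> VS dd {1..n}"
  shows "Fw dd n w \<in> pref_fns n" "\<And>c. c \<in> {1..n} \<Longrightarrow> car_diag n (Fw dd n w) c = dd c"
    "\<And>c. c \<in> {1..n} \<Longrightarrow> int (Fw dd n w c) = int (pos w c) - dd c + 1"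
    "diagword n (Fw dd n w) = \<tau>" "deviation n (Fw dd n w) = int l"
proof -
  have v: "valid dd w" "distinct w" "set w = {1..n}" using w unfolding VS_def by auto
  have ln: "length w = n" using v distinct_card by fastforce
  note FP = Fw_props[OF v]
  show "Fw dd n w \<in> pref_fns n" by (rule FP(1))
  show cd: "\<And>c. c \<in> {1..n} \<Longrightarrow> car_diag n (Fw dd n w) c = dd c" by (rule FP(3))
  show "int (Fw dd n w c) = int (pos w c) - dd c + 1" if "c \<in> {1..n}" for c
  proof -
    have p: "pos w c < length w" "w ! pos w c = c" using pos_nth that v by auto
    have "dd c \<le> int (pos w c)" using valid_upper[OF v(1) p(1)] p by simp
    then show ?thesis using that unfolding Fw_def by simp
  qed
  show "diagword n (Fw dd n w) = \<tau>"
    unfolding diagword_def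
  proof (rule sort_key_inj_key_eq)
    show "mset [1..<n + 1] = mset \<tau>" using dist set_tau set_eq_iff_mset_eq_distinct[of "[1..<n+1]" \<tau>] by auto
    show "inj_on (\<lambda>c. (- car_diag n (Fw dd n w) c, c)) (set [1..<n + 1])" by (auto simp: inj_on_def)
    have e: "map (\<lambda>c. (- car_diag n (Fw dd n w) c, c)) \<tau> = map (\<lambda>c. (- dd c, c)) \<tau>"
      using cd set_tau by (intro map_cong) auto
    show "sorted (map (\<lambda>c. (- car_diag n (Fw dd n w) c, c)) \<tau>)" unfolding e by (rule tau_sorted)
  qed
  have "(\<lambda>c. - car_diag n (Fw dd n w) c) ` {1..n} = (\<lambda>c. - dd c) ` {1..n}"
    using cd by (intro image_cong) auto
  then show "deviation n (Fw dd n w) = int l" unfolding deviation_def using dev_dd by simp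
qed

lemma sum_ri: "(\<Sum>c\<in>{1..n}. k - ri c) = maj \<tau>"
proof -
  have U: "{1..n} = (\<Union>j\<in>{..<k+1}. set (runs \<tau> ! j))"
  proof (intro equalityI subsetI)
    fix c assume c: "c \<in> {1..n}"
    have h: "ri c \<le> k \<and> c \<in> set (runs \<tau> ! ri c)" by (rule ri_in[OF c])
    then have "ri c < k + 1" "c \<in> set (runs \<tau> ! ri c)" by auto
    then show "c \<in> (\<Union>j\<in>{..<k+1}. set (runs \<tau> ! j))" by blast
  next
    fix c assume "c \<in> (\<Union>j\<in>{..<k+1}. set (runs \<tau> ! j))"
    then obtain j where "j < k + 1" "c \<in> set (runs \<tau> ! j)" by blast
    then show "c \<in> {1..n}" using R_props[of j] by auto
  qed
  have disj: "\<forall>i\<in>{..<k+1}. \<forall>j\<in>{..<k+1}. i \<noteq> j \<longrightarrow> set (runs \<tau> ! i) \<inter> set (runs \<tau> ! j) = {}"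
    using R_disj by simp
  have "(\<Sum>c\<in>{1..n}. k - ri c) = (\<Sum>j\<in>{..<k+1}. \<Sum>c\<in>set (runs \<tau> ! j). k - ri c)"
    unfolding U by (rule sum.UNION_disjoint[OF _ _ disj]) auto
  also have "\<dots> = (\<Sum>j\<in>{..<k+1}. length (runs \<tau> ! j) * (k - j))"
  proof (rule sum.cong)
    fix j assume j: "j \<in> {..<k+1}"
    then have "(\<Sum>c\<in>set (runs \<tau> ! j). k - ri c) = (\<Sum>c\<in>set (runs \<tau> ! j). k - j)"
    proof (intro sum.cong refl)
      fix x assume "x \<in> set (runs \<tau> ! j)"
      then have "ri x = j" using ri_eq[of j x] j by auto
      then show "k - ri x = k - j" by simp
    qed
    also have "\<dots> = length (runs \<tau> ! j) * (k - j)" using R_props[of j] j by (simp add: distinct_card)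
    finally show "(\<Sum>c\<in>set (runs \<tau> ! j). k - ri c) = length (runs \<tau> ! j) * (k - j)" .
  qed simp
  also have "\<dots> = Phi (runs \<tau>)" unfolding Phi_sum len by simp
  also have "\<dots> = maj \<tau>" using runs_len_maj[OF dist tau_ne] by simp
  finally show ?thesis .
qed

lemma area_F:
  assumes w: "w \<in> VS dd {1..n}"
  shows "area n (Fw dd n w) = int (maj \<tau>)"
proof -
  note FF = F_facts[OF w]
  have "area n (Fw dd n w) = (\<Sum>c\<in>{1..n}. dd c + int l)"
    unfolding area_def FF(5) using FF(2) by (intro sum.cong) auto
  also have "\<dots> = (\<Sum>c\<in>{1..n}. int (k - ri c))"
    using ri_le unfolding dd_def by (intro sum.cong) auto
  also have "\<dots> = int (maj \<tau>)" unfolding sum_ri[symmetric] by simp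
  finally show ?thesis .
qed

lemma tert:
  "card {c \<in> {1..n}. dd c < 0} = (\<Sum>i<l. rho \<tau> i)"
proof -
  have U: "{c \<in> {1..n}. dd c < 0} = (\<Union>i\<in>{..<l}. set (runs \<tau> ! (k - i)))"
  proof (intro equalityI subsetI)
    fix c assume "c \<in> {c \<in> {1..n}. dd c < 0}"
    then have c: "c \<in> {1..n}" "dd c < 0" by auto
    have rk: "ri c \<le> k" using ri_le c(1) by blast
    then have "k - ri c < l" "ri c \<le> k" using c(2) unfolding dd_def by linarith+
    moreover have "c \<in> set (runs \<tau> ! ri c)" using ri_in c by blast
    ultimately show "c \<in> (\<Union>i\<in>{..<l}. set (runs \<tau> ! (k - i)))"
      by (intro UN_I[of "k - ri c"]) auto
  next
    fix c assume "c \<in> (\<Union>i\<in>{..<l}. set (runs \<tau> ! (k - i)))"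
    then obtain i where i: "i < l" "c \<in> set (runs \<tau> ! (k - i))" by auto
    then have "c \<in> {1..n}" "ri c = k - i" using mem_R[of "k - i" c] by auto
    then show "c \<in> {c \<in> {1..n}. dd c < 0}" using i lk unfolding dd_def by auto
  qed
  have "card (\<Union>i\<in>{..<l}. set (runs \<tau> ! (k - i))) = (\<Sum>i<l. card (set (runs \<tau> ! (k - i))))"
  proof (rule card_UN_disjoint)
    show "\<forall>i\<in>{..<l}. \<forall>j\<in>{..<l}. i \<noteq> j \<longrightarrow> set (runs \<tau> ! (k - i)) \<inter> set (runs \<tau> ! (k - j)) = {}"
      using R_disj lk by auto
  qed auto
  also have "\<dots> = (\<Sum>i<l. rho \<tau> i)"
    using R_props unfolding rho_def len by (intro sum.cong) (auto simp: distinct_card)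
  finally show ?thesis using U by simp
qed

lemma dinv_F:
  assumes w: "w \<in> VS dd {1..n}"
  shows "dinv n (Fw dd n w) = wdinv dd w + (\<Sum>i<l. rho \<tau> i)"
proof -
  note FF = F_facts[OF w]
  have v: "valid dd w" "distinct w" "set w = {1..n}" using w unfolding VS_def by auto
  define F where "F = Fw dd n w"
  have posinj: "a = b" if "a \<in> {1..n}" "b \<in> {1..n}" "pos w a = pos w b" for a b
    using pos_nth[of a w] pos_nth[of b w] that v by metis
  define P1 where "P1 = {(a, b). a \<in> {1..n} \<and> b \<in> {1..n} \<and> car_diag n F a = car_diag n F b \<and> F a < F b \<and> a < b}"
  define S1 where "S1 = {(a, b). a \<in> {1..n} \<and> b \<in> {1..n} \<and> b < a \<and> car_diag n F a = car_diag n F b + 1 \<and> F a < F b}"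
  define W where "W = {(a, b). a \<in> set w \<and> b \<in> set w \<and> pos w a < pos w b \<and> dp dd a b}"
  have key: "(a, b) \<in> P1 \<union> S1 \<longleftrightarrow> (a, b) \<in> W" if ab: "a \<in> {1..n}" "b \<in> {1..n}" for a b
  proof -
    have Fa: "int (F a) = int (pos w a) - dd a + 1" "int (F b) = int (pos w b) - dd b + 1"
      using FF(3) ab unfolding F_def by auto
    have cda: "car_diag n F a = dd a" "car_diag n F b = dd b" using FF(2) ab unfolding F_def by auto
    have ne: "pos w a \<noteq> pos w b" if "a \<noteq> b" using posinj ab that by auto
    have lt: "F a < F b \<longleftrightarrow> int (pos w a) - dd a < int (pos w b) - dd b" using Fa by linarith
    have "(a, b) \<in> P1 \<longleftrightarrow> dd a = dd b \<and> pos w a < pos w b \<and> a < b"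
      unfolding P1_def using ab cda lt by auto
    moreover have "(a, b) \<in> S1 \<longleftrightarrow> dd a = dd b + 1 \<and> pos w a < pos w b \<and> b < a"
    proof -
      have "dd a = dd b + 1 \<Longrightarrow> b < a \<Longrightarrow> F a < F b \<longleftrightarrow> pos w a < pos w b"
        using lt ne by fastforce
      then show ?thesis unfolding S1_def using ab cda by auto
    qed
    moreover have "(a, b) \<in> W \<longleftrightarrow> pos w a < pos w b \<and> dp dd a b"
      unfolding W_def using ab v by auto
    ultimately show ?thesis unfolding dp_def by auto
  qed
  have "P1 \<union> S1 = W"
  proof (intro equalityI subsetI)
    fix x assume x: "x \<in> P1 \<union> S1"
    then obtain a b where "x = (a, b)" "a \<in> {1..n}" "b \<in> {1..n}" unfolding P1_def S1_def by auto
    then show "x \<in> W" using key x by auto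
  next
    fix x assume x: "x \<in> W"
    then obtain a b where "x = (a, b)" "a \<in> {1..n}" "b \<in> {1..n}" unfolding W_def using v by auto
    then show "x \<in> P1 \<union> S1" using key x by auto
  qed
  moreover have "card (P1 \<union> S1) = card P1 + card S1"
    by (rule card_Un_disjoint)
      (auto simp: P1_def S1_def intro: finite_subset[of _ "{1..n} \<times> {1..n}"])
  ultimately have ps: "primary_dinv n F + secondary_dinv n F = wdinv dd w"
    using wdinv_card[OF v(2), of dd] unfolding primary_dinv_def secondary_dinv_def P1_def S1_def W_def
    by simp
  have "tertiary_dinv n F = card {c \<in> {1..n}. dd c < 0}"
    unfolding tertiary_dinv_def using FF(2) unfolding F_def by (intro arg_cong[where f=card]) auto
  then show ?thesis using ps tert unfolding dinv_def F_def by simp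
qed

end


context setting begin

lemma Fw_cong: "(\<And>c. c \<in> {1..n} \<Longrightarrow> D c = D' c) \<Longrightarrow> Fw D n w = Fw D' n w"
  unfolding Fw_def by auto

lemma bij_F:
  "bij_betw (Fw dd n) (VS dd {1..n}) {f \<in> pref_fns n. diagword n f = \<tau> \<and> deviation n f = int l}"
  unfolding bij_betw_def
proof (intro conjI)
  have inv: "sort_key (\<lambda>c. (Fw dd n w c, c)) [1..<n+1] = w" if w: "w \<in> VS dd {1..n}" for w
  proof (rule sort_key_inj_key_eq)
    have v: "valid dd w" "distinct w" "set w = {1..n}" using w unfolding VS_def by auto
    show "mset [1..<n + 1] = mset w" using v set_eq_iff_mset_eq_distinct[of "[1..<n+1]" w] by auto
    show "inj_on (\<lambda>c. (Fw dd n w c, c)) (set [1..<n + 1])" by (auto simp: inj_on_def)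
    have "sorted_wrt (\<lambda>a b. (Fw dd n w a, a) < (Fw dd n w b, b)) w" using Fw_props(4)[OF v] .
    then show "sorted (map (\<lambda>c. (Fw dd n w c, c)) w)"
      by (auto simp: sorted_map elim!: sorted_wrt_mono_rel[rotated])
  qed
  show "inj_on (Fw dd n) (VS dd {1..n})"
    by (rule inj_onI) (metis inv)
  show "Fw dd n ` VS dd {1..n} = {f \<in> pref_fns n. diagword n f = \<tau> \<and> deviation n f = int l}"
  proof (intro equalityI subsetI)
    fix f assume "f \<in> Fw dd n ` VS dd {1..n}"
    then obtain w where "w \<in> VS dd {1..n}" "f = Fw dd n w" by auto
    then show "f \<in> {f \<in> pref_fns n. diagword n f = \<tau> \<and> deviation n f = int l}" using F_facts by auto
  next
    fix f assume "f \<in> {f \<in> pref_fns n. diagword n f = \<tau> \<and> deviation n f = int l}"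
    then have f: "f \<in> pref_fns n" "diagword n f = \<tau>" "deviation n f = int l" by auto
    define w where "w = sort_key (\<lambda>c. (f c, c)) [1..<n+1]"
    note G = G_props[OF f(1), folded w_def]
    have eq: "\<forall>c\<in>{1..n}. car_diag n f c = dd c"
      by (rule structural[OF G(3) G(1) G(2)]) (use f in \<open>auto simp: diagword_def deviation_def\<close>)
    have "valid dd w" using G(3) valid_cong[of w "car_diag n f" dd] eq G(2) by auto
    then have wV: "w \<in> VS dd {1..n}" using G unfolding VS_def by auto
    have "Fw dd n w = f" using G(4) Fw_cong[of "car_diag n f" dd w] eq by auto
    then show "f \<in> Fw dd n ` VS dd {1..n}" using wV by force
  qed
qed

lemma main:
  fixes q t :: "'a::comm_ring_1"
  shows "(\<Sum>f\<in>{f \<in> pref_fns n. diagword n f = \<tau> \<and> deviation n f = int l}.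
            t ^ nat (area n f) * q ^ dinv n f)
       = t ^ maj \<tau> * q ^ (\<Sum>i<l. rho \<tau> i) * (\<Prod>c\<in>{1..n}. qint (sched l \<tau> c) q)"
proof -
  have "(\<Sum>f\<in>{f \<in> pref_fns n. diagword n f = \<tau> \<and> deviation n f = int l}. t ^ nat (area n f) * q ^ dinv n f)
      = (\<Sum>w\<in>VS dd {1..n}. t ^ nat (area n (Fw dd n w)) * q ^ dinv n (Fw dd n w))"
    by (rule sum.reindex_bij_betw[OF bij_F, symmetric])
  also have "\<dots> = (\<Sum>w\<in>VS dd {1..n}. (t ^ maj \<tau> * q ^ (\<Sum>i<l. rho \<tau> i)) * q ^ wdinv dd w)"
    by (intro sum.cong refl) (simp add: area_F dinv_F power_add algebra_simps)
  also have "\<dots> = t ^ maj \<tau> * q ^ (\<Sum>i<l. rho \<tau> i) * GF dd {1..n} q"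
    unfolding GF_def by (simp add: sum_distrib_left)
  also have "\<dots> = t ^ maj \<tau> * q ^ (\<Sum>i<l. rho \<tau> i) * (\<Prod>c\<in>{1..n}. qint (sched l \<tau> c) q)"
    by (simp only: GF_prod)
  finally show ?thesis .
qed

end

theorem theorem2p2:
  fixes n k l :: nat and \<tau> :: "nat list" and q t :: "'a::comm_ring_1"
  assumes "n \<ge> 1" and "is_perm_word n \<tau>"
    and "length (runs \<tau>) = k + 1" and "l \<le> k"
  shows "(\<Sum>f\<in>{f \<in> pref_fns n. diagword n f = \<tau> \<and> deviation n f = int l}.
            t ^ nat (area n f) * q ^ dinv n f)
       = t ^ maj \<tau> * q ^ (\<Sum>i<l. rho \<tau> i) * (\<Prod>c\<in>{1..n}. qint (sched l \<tau> c) q)"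
proof -
  interpret setting n k l \<tau> using assms by unfold_locales auto
  show ?thesis by (rule main)
qed


end
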